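(* Let $(\mathfrak{h},[\cdot,\cdot])$ be a finite-dimensional real left Leibniz algebra, with center $Z(\mathfrak{h})=\{a:[a,\mathfrak{h}]=[\mathfrak{h},a]=0\}$ and derived subspace $[\mathfrak{h},\mathfrak{h}]$. (1) If $\mathfrak{h}$ is a Lie algebra (i.e. its bracket is skew-symmetric), $[\mathfrak{h},\mathfrak{h}]+Z(\mathfrak{h})\neq\mathfrak{h}$ and $Z(\mathfrak{h})\neq\{0\}$, then $\mathfrak{h}$ is not rigid. (2) If $[\mathfrak{h},\mathfrak{h}]+Z(\mathfrak{h})\neq\mathfrak{h}$ and $Z(\mathfrak{h})$ is not contained in $[\mathfrak{h},\mathfrak{h}]$, then $\mathfrak{h}$ is not rigid.
   Context: A left Leibniz algebra: bilinear bracket with $[u,[v,w]]=[[u,v],w]+[v,[u,w]]$; $\mathrm{ad}_x(y)=[x,y]$. A linear Lie rack structure on a finite-dimensional real vector space $V$ is a map $\rhd:V\times V\to V$, smooth, with each $\mathrm{L}_x:y\mapsto x\rhd y$ a linear bijection, $x\rhd(y\rhd z)=(x\rhd y)\rhd(x\rhd z)$, $x\rhd 0=0$ and $\mathrm{L}_0=\mathrm{Id}$. It is analytic if $x\rhd y=y+\sum_{n\ge1}A_{n,1}(x,\ldots,x,y)$ (convergent) with $A_{n,1}$ $(n+1)$-multilinear and symmetric in the first $n$ arguments. Its associated bracket is $[u,v]_{\rhd}=\frac{d}{dt}\big|_{t=0}\mathrm{L}_{tu}(v)$. A left Leibniz algebra $(\mathfrak{h},[\cdot,\cdot])$ is called rigid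 if every analytic linear Lie rack structure $\rhd$ on $\mathfrak{h}$ with $[\cdot,\cdot]_{\rhd}=[\cdot,\cdot]$ is of the form $x\rhd y=\exp\big(F(P(x,\ldots,x))\mathrm{ad}_x\big)(y)$, where $F:\mathbb{R}\to\mathbb{R}$ is analytic with $F(0)=1$ and $P$ is a real symmetric multilinear $p$-form on $\mathfrak{h}$ satisfying $\sum_{i=1}^pP(x_1,\ldots,[y,x_i],\ldots,x_p)=0$ for all $y,x_1,\ldots,x_p$. *)

theory Defs
  imports "HOL-Analysis.Analysis"
begin

definition bilinear_bracket :: "('a::real_vector \<Rightarrow> 'a \<Rightarrow> 'a) \<Rightarrow> bool" where
  "bilinear_bracket br \<longleftrightarrow> (\<forall>x. linear (br x)) \<and> (\<forall>y. linear (\<lambda>x. br x y))"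

definition left_leibniz_algebra :: "('a::real_vector \<Rightarrow> 'a \<Rightarrow> 'a) \<Rightarrow> bool" where
  "left_leibniz_algebra br \<longleftrightarrow> bilinear_bracket br \<and>
     (\<forall>u v w. br u (br v w) = br (br u v) w + br v (br u w))"

definition is_lie_bracket :: "('a::real_vector \<Rightarrow> 'a \<Rightarrow> 'a) \<Rightarrow> bool" where
  "is_lie_bracket br \<longleftrightarrow> (\<forall>x y. br x y = - br y x)"

definition lcenter :: "('a::real_vector \<Rightarrow> 'a \<Rightarrow> 'a) \<Rightarrow> 'a set" where
  "lcenter br = {a. \<forall>x. br a x = 0 \<and> br x a = 0}"

definition derived :: "('a::real_vector \<Rightarrow> 'a \<Rightarrow> 'a) \<Rightarrow> 'a set" where
  "derived br = span {br x y | x y. True}"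

definition multilinear :: "nat \<Rightarrow> ('a::real_vector list \<Rightarrow> 'b::real_vector) \<Rightarrow> bool" where
  "multilinear p F \<longleftrightarrow> (\<forall>xs i. length xs = p \<and> i < p \<longrightarrow> linear (\<lambda>v. F (xs[i := v])))"

definition symmetric_args :: "nat \<Rightarrow> ('a list \<Rightarrow> 'b) \<Rightarrow> bool" where
  "symmetric_args p F \<longleftrightarrow> (\<forall>xs ys. length xs = p \<and> mset xs = mset ys \<longrightarrow> F xs = F ys)"

text \<open>D k x [v1,...,vk] is the k-th Frechet derivative of f at x applied to v1..vk;
  all of them exist everywhere.\<close>
definition smooth_map :: "('c::real_normed_vector \<Rightarrow> 'b::real_normed_vector) \<Rightarrow> bool" where
  "smooth_map f \<longleftrightarrow> (\<exists>D :: nat \<Rightarrow> 'c \<Rightarrow> 'c list \<Rightarrow> 'b.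
      (\<forall>x. D 0 x [] = f x) \<and>
      (\<forall>k vs x. length vs = k \<longrightarrow>
          ((\<lambda>y. D k y vs) has_derivative (\<lambda>v. D (Suc k) x (v # vs))) (at x)))"

definition linear_lie_rack :: "('a::euclidean_space \<Rightarrow> 'a \<Rightarrow> 'a) \<Rightarrow> bool" where
  "linear_lie_rack rk \<longleftrightarrow>
     smooth_map (\<lambda>(x, y). rk x y) \<and>
     (\<forall>x. linear (rk x) \<and> bij (rk x)) \<and>
     (\<forall>x y z. rk x (rk y z) = rk (rk x y) (rk x z)) \<and>
     (\<forall>x. rk x 0 = 0) \<and>
     rk 0 = id"

text \<open>Analytic: x |> y = y + sum_{n>=1} A_n(x,...,x,y), A_n being (n+1)-multilinear and
  symmetric in its first n arguments (A n xs y with length xs = n).\<close>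
definition analytic_rack :: "('a::euclidean_space \<Rightarrow> 'a \<Rightarrow> 'a) \<Rightarrow> bool" where
  "analytic_rack rk \<longleftrightarrow> linear_lie_rack rk \<and>
     (\<exists>A :: nat \<Rightarrow> 'a list \<Rightarrow> 'a \<Rightarrow> 'a.
        (\<forall>n xs. length xs = n \<longrightarrow> linear (A n xs)) \<and>
        (\<forall>n y. multilinear n (\<lambda>xs. A n xs y)) \<and>
        (\<forall>n y. symmetric_args n (\<lambda>xs. A n xs y)) \<and>
        (\<forall>x y. (\<lambda>n. A (Suc n) (replicate (Suc n) x) y) sums (rk x y - y)))"

definition rack_bracket_is :: "('a::euclidean_space \<Rightarrow> 'a \<Rightarrow> 'a) \<Rightarrow> ('a \<Rightarrow> 'a \<Rightarrow> 'a) \<Rightarrow> bool" where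
  "rack_bracket_is rk br \<longleftrightarrow>
     (\<forall>u v. ((\<lambda>t. rk (t *\<^sub>R u) v) has_vector_derivative br u v) (at 0))"

definition real_analytic_fun :: "(real \<Rightarrow> real) \<Rightarrow> bool" where
  "real_analytic_fun F \<longleftrightarrow> (\<forall>a. \<exists>r>0. \<exists>c :: nat \<Rightarrow> real.
      \<forall>t. \<bar>t - a\<bar> < r \<longrightarrow> (\<lambda>n. c n * (t - a) ^ n) sums F t)"

definition exp_ad :: "('a::euclidean_space \<Rightarrow> 'a \<Rightarrow> 'a) \<Rightarrow> real \<Rightarrow> 'a \<Rightarrow> 'a \<Rightarrow> 'a" where
  "exp_ad br c x y = (\<Sum>k. ((c ^ k) / fact k) *\<^sub>R ((br x ^^ k) y))"

definition invariant_form :: "('a::euclidean_space \<Rightarrow> 'a \<Rightarrow> 'a) \<Rightarrow> nat \<Rightarrow> ('a list \<Rightarrow> real) \<Rightarrow> bool" where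
  "invariant_form br p P \<longleftrightarrow> multilinear p P \<and> symmetric_args p P \<and>
     (\<forall>y xs. length xs = p \<longrightarrow> (\<Sum>i<p. P (xs[i := br y (xs ! i)])) = 0)"

definition rigid :: "('a::euclidean_space \<Rightarrow> 'a \<Rightarrow> 'a) \<Rightarrow> bool" where
  "rigid br \<longleftrightarrow> (\<forall>rk. analytic_rack rk \<and> rack_bracket_is rk br \<longrightarrow>
     (\<exists>F p P. real_analytic_fun F \<and> F 0 = 1 \<and> invariant_form br p P \<and>
        (\<forall>x y. rk x y = exp_ad br (F (P (replicate p x))) x y)))"

end

theory Submission imports Defs begin


lemma Cauchy_product_sums_bil:
  fixes a :: "nat \<Rightarrow> 'a::banach" and b :: "nat \<Rightarrow> 'b::banach"
    and pr :: "'a \<Rightarrow> 'b \<Rightarrow> 'c::real_normed_vector"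
  assumes bb: "bounded_bilinear pr"
    and a: "summable (\<lambda>k. norm (a k))"
    and b: "summable (\<lambda>k. norm (b k))"
  shows "(\<lambda>k. \<Sum>i\<le>k. pr (a i) (b (k - i))) sums (pr (\<Sum>k. a k) (\<Sum>k. b k))"
proof -
  obtain KK where KK: "KK > 0" "\<And>x y. norm (pr x y) \<le> norm x * norm y * KK"
    using bounded_bilinear.pos_bounded[OF bb] by blast
  let ?S1 = "\<lambda>n::nat. {..<n} \<times> {..<n}"
  let ?S2 = "\<lambda>n::nat. {(i,j). i + j < n}"
  have S1_mono: "\<And>m n. m \<le> n \<Longrightarrow> ?S1 m \<subseteq> ?S1 n" by auto
  have S2_le_S1: "\<And>n. ?S2 n \<subseteq> ?S1 n" by auto
  have S1_le_S2: "\<And>n. ?S1 (n div 2) \<subseteq> ?S2 n" by auto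
  have finite_S1: "\<And>n. finite (?S1 n)" by simp
  with S2_le_S1 have finite_S2: "\<And>n. finite (?S2 n)" by (rule finite_subset)
  let ?g = "\<lambda>(i,j). pr (a i) (b j)"
  let ?f = "\<lambda>(i,j). norm (a i) * norm (b j)"
  have f_nonneg: "\<And>x. 0 \<le> ?f x" by auto
  then have norm_sum_f: "\<And>A. norm (sum ?f A) = sum ?f A"
    unfolding real_norm_def
    by (simp only: abs_of_nonneg sum_nonneg [rule_format])
  have sp: "\<And>n. pr (\<Sum>k<n. a k) (\<Sum>k<n. b k) = sum ?g (?S1 n)"
  proof -
    fix n
    have "pr (\<Sum>k<n. a k) (\<Sum>k<n. b k) = (\<Sum>i<n. pr (a i) (\<Sum>k<n. b k))"
      by (rule bounded_bilinear.sum_left[OF bb])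
    also have "\<dots> = (\<Sum>i<n. \<Sum>j<n. pr (a i) (b j))"
      by (simp add: bounded_bilinear.sum_right[OF bb])
    also have "\<dots> = sum ?g (?S1 n)"
      by (simp add: sum.cartesian_product)
    finally show "pr (\<Sum>k<n. a k) (\<Sum>k<n. b k) = sum ?g (?S1 n)" .
  qed
  have "(\<lambda>n. pr (\<Sum>k<n. a k) (\<Sum>k<n. b k)) \<longlonglongrightarrow> pr (\<Sum>k. a k) (\<Sum>k. b k)"
    by (intro bounded_bilinear.tendsto[OF bb] summable_LIMSEQ summable_norm_cancel [OF a] summable_norm_cancel [OF b])
  then have 1: "(\<lambda>n. sum ?g (?S1 n)) \<longlonglongrightarrow> pr (\<Sum>k. a k) (\<Sum>k. b k)"
    by (simp only: sp)
  have "(\<lambda>n. (\<Sum>k<n. norm (a k)) * (\<Sum>k<n. norm (b k))) \<longlonglongrightarrow> (\<Sum>k. norm (a k)) * (\<Sum>k. norm (b k))"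
    using a b by (intro tendsto_mult summable_LIMSEQ)
  then have "(\<lambda>n. sum ?f (?S1 n)) \<longlonglongrightarrow> (\<Sum>k. norm (a k)) * (\<Sum>k. norm (b k))"
    by (simp only: sum_product sum.Sigma [rule_format] finite_lessThan)
  then have "convergent (\<lambda>n. sum ?f (?S1 n))"
    by (rule convergentI)
  then have Cauchy: "Cauchy (\<lambda>n. sum ?f (?S1 n))"
    by (rule convergent_Cauchy)
  have "Zfun (\<lambda>n. sum ?f (?S1 n - ?S2 n)) sequentially"
  proof (rule ZfunI, simp only: eventually_sequentially norm_sum_f)
    fix r :: real
    assume r: "0 < r"
    from CauchyD [OF Cauchy r] obtain N
      where "\<forall>m\<ge>N. \<forall>n\<ge>N. norm (sum ?f (?S1 m) - sum ?f (?S1 n)) < r" ..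
    then have "\<And>m n. N \<le> n \<Longrightarrow> n \<le> m \<Longrightarrow> norm (sum ?f (?S1 m - ?S1 n)) < r"
      by (simp only: sum_diff finite_S1 S1_mono)
    then have N: "\<And>m n. N \<le> n \<Longrightarrow> n \<le> m \<Longrightarrow> sum ?f (?S1 m - ?S1 n) < r"
      by (simp only: norm_sum_f)
    show "\<exists>N. \<forall>n\<ge>N. sum ?f (?S1 n - ?S2 n) < r"
    proof (intro exI allI impI)
      fix n
      assume "2 * N \<le> n"
      then have n: "N \<le> n div 2" by simp
      have "sum ?f (?S1 n - ?S2 n) \<le> sum ?f (?S1 n - ?S1 (n div 2))"
        by (intro sum_mono2 finite_Diff finite_S1 f_nonneg Diff_mono subset_refl S1_le_S2)
      also have "\<dots> < r"
        using n div_le_dividend by (rule N)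
      finally show "sum ?f (?S1 n - ?S2 n) < r" .
    qed
  qed
  then have "Zfun (\<lambda>n. sum ?g (?S1 n - ?S2 n)) sequentially"
    apply (rule Zfun_imp_Zfun [where K=KK])
    apply (rule always_eventually, rule allI)
    apply (simp only: norm_sum_f)
    apply (rule order_trans [OF norm_sum])
    apply (simp add: sum_distrib_right)
    apply (rule sum_mono)
    using KK(2) by (auto)
  then have 2: "(\<lambda>n. sum ?g (?S1 n) - sum ?g (?S2 n)) \<longlonglongrightarrow> 0"
    unfolding tendsto_Zfun_iff diff_0_right
    by (simp only: sum_diff finite_S1 S2_le_S1)
  with 1 have "(\<lambda>n. sum ?g (?S2 n)) \<longlonglongrightarrow> pr (\<Sum>k. a k) (\<Sum>k. b k)"
    by (rule Lim_transform2)
  then show ?thesis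
    by (simp only: sums_def sum.triangle_reindex)
qed



locale LLA =
  fixes br :: "'a::euclidean_space \<Rightarrow> 'a \<Rightarrow> 'a"
  assumes lla: "left_leibniz_algebra br"
begin

lemma lin_r: "linear (br x)"
  using lla unfolding left_leibniz_algebra_def bilinear_bracket_def by blast

lemma lin_l: "linear (\<lambda>x. br x y)"
  using lla unfolding left_leibniz_algebra_def bilinear_bracket_def by blast

lemma jac: "br u (br v w) = br (br u v) w + br v (br u w)"
  using lla unfolding left_leibniz_algebra_def by blast

lemma bb: "bounded_bilinear br"
  using lin_r lin_l by (simp add: bilinear_conv_bounded_bilinear[symmetric] bilinear_def)

lemma br_add_l: "br (x + y) z = br x z + br y z"
  using linear_add[OF lin_l[of z]] by simp
lemma br_add_r: "br z (x + y) = br z x + br z y"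
  using lin_r[of z] by (simp add: linear_add)
lemma br_scale_l: "br (c *\<^sub>R x) z = c *\<^sub>R br x z"
  using linear_scale[OF lin_l[of z]] by simp
lemma br_scale_r: "br z (c *\<^sub>R x) = c *\<^sub>R br z x"
  using lin_r[of z] by (simp add: linear_scale)
lemma br_0_l[simp]: "br 0 z = 0"
  using linear_0[OF lin_l[of z]] by simp
lemma br_0_r[simp]: "br z 0 = 0"
  using lin_r[of z] by (simp add: linear_0)
lemma br_neg_l: "br (- x) z = - br x z"
  using linear_neg[OF lin_l[of z]] by simp
lemma br_neg_r: "br z (- x) = - br z x"
  using lin_r[of z] by (simp add: linear_neg)

definition BB where "BB = (SOME K. K > 0 \<and> (\<forall>x y. norm (br x y) \<le> norm x * norm y * K))"

lemma BB: "BB > 0" "norm (br x y) \<le> norm x * norm y * BB"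
proof -
  have "\<exists>K. K > 0 \<and> (\<forall>x y. norm (br x y) \<le> norm x * norm y * K)"
    using bounded_bilinear.pos_bounded[OF bb] by blast
  from someI_ex[OF this] show "BB > 0" "norm (br x y) \<le> norm x * norm y * BB"
    unfolding BB_def by auto
qed

lemma lin_pow: "linear (br x ^^ k)"
  by (induction k) (auto intro: linear_compose[unfolded o_def] lin_r simp: id_def linear_id[unfolded id_def])

lemma norm_pow: "norm ((br x ^^ k) y) \<le> (BB * norm x) ^ k * norm y"
proof (induction k)
  case 0 then show ?case by simp
next
  case (Suc k)
  have "norm ((br x ^^ Suc k) y) = norm (br x ((br x ^^ k) y))" by simp
  also have "\<dots> \<le> norm x * norm ((br x ^^ k) y) * BB" by (rule BB)
  also have "\<dots> \<le> norm x * ((BB * norm x) ^ k * norm y) * BB"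
    using Suc BB(1) by (intro mult_right_mono mult_left_mono) auto
  also have "\<dots> = (BB * norm x) ^ Suc k * norm y" by (simp add: algebra_simps)
  finally show ?case .
qed

definition E :: "'a \<Rightarrow> 'a \<Rightarrow> 'a" where
  "E x y = (\<Sum>k. (1 / fact k) *\<^sub>R (br x ^^ k) y)"

lemma E_exp_ad: "exp_ad br 1 x y = E x y"
  by (simp add: exp_ad_def E_def)

lemma summable_norm_E: "summable (\<lambda>k. norm ((1 / fact k) *\<^sub>R (br x ^^ k) y))"
proof (rule summable_comparison_test[OF exI[of _ 0]])
  show "summable (\<lambda>k. norm y * (inverse (fact k) * (BB * norm x) ^ k))"
    by (intro summable_mult summable_exp)
  show "\<forall>n\<ge>0. norm (norm ((1 / fact n) *\<^sub>R (br x ^^ n) y)) \<le> norm y * (inverse (fact n) * (BB * norm x) ^ n)"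
  proof (intro allI impI)
    fix n :: nat
    have "norm (norm ((1 / fact n) *\<^sub>R (br x ^^ n) y)) = (1 / fact n) * norm ((br x ^^ n) y)"
      by simp
    also have "\<dots> \<le> (1 / fact n) * ((BB * norm x) ^ n * norm y)"
      by (intro mult_left_mono norm_pow) auto
    finally show "norm (norm ((1 / fact n) *\<^sub>R (br x ^^ n) y)) \<le> norm y * (inverse (fact n) * (BB * norm x) ^ n)"
      by (simp add: field_simps)
  qed
qed

lemma summable_E: "summable (\<lambda>k. (1 / fact k) *\<^sub>R (br x ^^ k) y)"
  by (rule summable_norm_cancel[OF summable_norm_E])

lemma sums_E: "(\<lambda>k. (1 / fact k) *\<^sub>R (br x ^^ k) y) sums E x y"
  unfolding E_def by (rule summable_sums[OF summable_E])

lemma linear_suminf: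
  fixes f :: "nat \<Rightarrow> 'c::real_vector \<Rightarrow> 'd::{real_normed_vector}"
  assumes "\<And>n. linear (f n)" "\<And>y. summable (\<lambda>n. f n y)"
  shows "linear (\<lambda>y. \<Sum>n. f n y)"
proof (rule linearI)
  fix b1 b2
  show "(\<Sum>n. f n (b1 + b2)) = (\<Sum>n. f n b1) + (\<Sum>n. f n b2)"
    using assms by (simp add: linear_add suminf_add)
next
  fix r b
  show "(\<Sum>n. f n (r *\<^sub>R b)) = r *\<^sub>R (\<Sum>n. f n b)"
    using assms by (simp add: linear_scale suminf_scaleR_right)
qed

lemma linear_E: "linear (E x)"
  unfolding E_def[abs_def]
  by (rule linear_suminf) (auto intro: linear_compose_scale_right lin_pow summable_E)

lemma bl_E: "bounded_linear (E x)"
  using linear_E linear_conv_bounded_linear by blast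

lemma E_0[simp]: "E 0 y = y"
proof -
  have "(\<lambda>k. (1 / fact k) *\<^sub>R (br 0 ^^ k) y) = (\<lambda>k. if k = 0 then y else 0)"
    by (rule ext) (case_tac k, auto)
  then show ?thesis unfolding E_def using sums_single[of 0 "\<lambda>_. y"] sums_unique
    by (metis (no_types) sums_unique)
qed

end

context LLA begin


lemma E_hom: "E x (br y z) = br (E x y) (E x z)"
proof -
  define a where "a i = (1 / fact i) *\<^sub>R (br x ^^ i) y" for i
  define b where "b j = (1 / fact j) *\<^sub>R (br x ^^ j) z" for j
  define p where "p i j = br (a i) (b j)" for i j
  define c where "c n = (\<Sum>i\<le>n. p i (n - i))" for n
  have xa: "br x (a i) = real (Suc i) *\<^sub>R a (Suc i)" for i
    using fact_gt_zero[of i] by (simp add: a_def br_scale_r field_simps add_nonneg_eq_0_iff)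
  have xb: "br x (b i) = real (Suc i) *\<^sub>R b (Suc i)" for i
    using fact_gt_zero[of i] by (simp add: b_def br_scale_r field_simps add_nonneg_eq_0_iff)
  have step: "br x (c n) = real (Suc n) *\<^sub>R c (Suc n)" for n
  proof -
    have "br x (c n) = (\<Sum>i\<le>n. br x (p i (n - i)))"
      unfolding c_def by (rule linear_sum[OF lin_r])
    also have "\<dots> = (\<Sum>i\<le>n. real (Suc i) *\<^sub>R p (Suc i) (n - i)) + (\<Sum>i\<le>n. real (Suc n - i) *\<^sub>R p i (Suc n - i))"
      unfolding sum.distrib[symmetric]
    proof (rule sum.cong[OF refl])
      fix i assume "i \<in> {..n}"
      then have "Suc (n - i) = Suc n - i" by auto
      then show "br x (p i (n - i)) = real (Suc i) *\<^sub>R p (Suc i) (n - i) + real (Suc n - i) *\<^sub>R p i (Suc n - i)"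
        unfolding p_def jac xa xb by (simp add: br_scale_l br_scale_r)
    qed
    also have "(\<Sum>i\<le>n. real (Suc i) *\<^sub>R p (Suc i) (n - i)) = (\<Sum>i\<le>Suc n. real i *\<^sub>R p i (Suc n - i))"
      by (subst sum.atMost_Suc_shift) simp
    also have "(\<Sum>i\<le>n. real (Suc n - i) *\<^sub>R p i (Suc n - i)) = (\<Sum>i\<le>Suc n. real (Suc n - i) *\<^sub>R p i (Suc n - i))"
      by simp
    also have "(\<Sum>i\<le>Suc n. real i *\<^sub>R p i (Suc n - i)) + (\<Sum>i\<le>Suc n. real (Suc n - i) *\<^sub>R p i (Suc n - i))
        = (\<Sum>i\<le>Suc n. real (Suc n) *\<^sub>R p i (Suc n - i))"
      unfolding sum.distrib[symmetric]
      by (rule sum.cong[OF refl]) (auto simp: scaleR_add_left[symmetric] of_nat_diff)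
    also have "\<dots> = real (Suc n) *\<^sub>R c (Suc n)"
      unfolding c_def by (rule scaleR_sum_right[symmetric])
    finally show ?thesis .
  qed
  have cn: "c n = (1 / fact n) *\<^sub>R (br x ^^ n) (br y z)" for n
  proof (induction n)
    case 0 then show ?case by (simp add: c_def p_def a_def b_def)
  next
    case (Suc n)
    have "c (Suc n) = (1 / real (Suc n)) *\<^sub>R br x (c n)"
      using step[of n] by simp
    also have "\<dots> = (1 / fact (Suc n)) *\<^sub>R (br x ^^ Suc n) (br y z)"
      using Suc by (simp add: br_scale_r)
    finally show ?case .
  qed
  have "c sums br (suminf a) (suminf b)"
    unfolding c_def p_def
    by (rule Cauchy_product_sums_bil[OF bb]) (use summable_norm_E in \<open>auto simp: a_def b_def\<close>)
  moreover have "suminf a = E x y" "suminf b = E x z"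
    by (simp_all add: a_def[abs_def] b_def[abs_def] E_def)
  ultimately have "c sums br (E x y) (E x z)" by simp
  moreover have "c sums E x (br y z)"
  proof -
    have "c = (\<lambda>k. (1 / fact k) *\<^sub>R (br x ^^ k) (br y z))" using cn by (intro ext) simp
    then show ?thesis using sums_E[of x "br y z"] by simp
  qed
  ultimately show ?thesis using sums_unique2 by blast
qed

end

context LLA begin

lemma E_scale: "E x (c *\<^sub>R v) = c *\<^sub>R E x v"
  using linear_scale[OF linear_E] by blast
lemma E_add: "E x (u + v) = E x u + E x v"
  using linear_add[OF linear_E] by blast

lemma E_hom_pow: "E x ((br y ^^ k) w) = (br (E x y) ^^ k) (E x w)"
  by (induction k) (auto simp: E_hom)

lemma E_conj: "E (E x y) (E x z) = E x (E y z)"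
proof -
  have "E x (E y z) = (\<Sum>k. E x ((1 / fact k) *\<^sub>R (br y ^^ k) z))"
    unfolding E_def[of y] by (rule bounded_linear.suminf[OF bl_E summable_E])
  also have "\<dots> = (\<Sum>k. (1 / fact k) *\<^sub>R (br (E x y) ^^ k) (E x z))"
    by (simp add: E_scale E_hom_pow)
  finally show ?thesis by (simp add: E_def)
qed

lemma pow_neg: "(br (- x) ^^ k) w = (-1) ^ k *\<^sub>R (br x ^^ k) w"
  by (induction k) (auto simp: br_neg_l br_scale_r)

lemma bl_pow: "bounded_linear (br x ^^ k)"
  using lin_pow linear_conv_bounded_linear by blast

lemma E_inv: "E (- x) (E x z) = z"
proof -
  define a where "a k = ((-1) ^ k / fact k) *\<^sub>R Blinfun (br x ^^ k)" for k
  define b where "b j = (1 / fact j) *\<^sub>R (br x ^^ j) z" for j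
  have ap: "blinfun_apply (a k) w = ((-1) ^ k / fact k) *\<^sub>R (br x ^^ k) w" for k w
    by (simp add: a_def blinfun.scaleR_left bounded_linear_Blinfun_apply[OF bl_pow])
  have na: "norm (a k) \<le> inverse (fact k) * (BB * norm x) ^ k" for k
  proof -
    have "norm (a k) = (1 / fact k) * norm (Blinfun (br x ^^ k))"
      by (simp add: a_def norm_power)
    also have "norm (Blinfun (br x ^^ k)) \<le> (BB * norm x) ^ k"
      by (rule norm_blinfun_bound) (use BB(1) norm_pow in \<open>auto simp: bounded_linear_Blinfun_apply[OF bl_pow]\<close>)
    ultimately show ?thesis by (simp add: divide_inverse mult_left_mono)
  qed
  have sa: "summable (\<lambda>k. norm (a k))"
  proof (rule summable_comparison_test[OF exI[of _ 0]])
    show "summable (\<lambda>k. inverse (fact k) * (BB * norm x) ^ k)" by (rule summable_exp)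
  qed (use na in auto)
  have "(\<lambda>n. \<Sum>i\<le>n. blinfun_apply (a i) (b (n - i))) sums blinfun_apply (suminf a) (suminf b)"
    by (rule Cauchy_product_sums_bil[OF bounded_bilinear_blinfun_apply sa])
       (use summable_norm_E in \<open>simp add: b_def\<close>)
  moreover have "(\<lambda>n. \<Sum>i\<le>n. blinfun_apply (a i) (b (n - i))) = (\<lambda>n. if n = 0 then z else 0)"
  proof (rule ext)
    fix n
    have "(\<Sum>i\<le>n. blinfun_apply (a i) (b (n - i))) = (\<Sum>i\<le>n. ((-1) ^ i * real (n choose i)) *\<^sub>R ((1 / fact n) *\<^sub>R (br x ^^ n) z))"
    proof (rule sum.cong[OF refl])
      fix i assume "i \<in> {..n}"
      then have i: "i \<le> n" by simp
      have "blinfun_apply (a i) (b (n - i)) = ((-1) ^ i / fact i * (1 / fact (n - i))) *\<^sub>R (br x ^^ (i + (n - i))) z"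
        by (simp add: ap b_def linear_scale[OF lin_pow] funpow_add)
      also have "\<dots> = ((-1) ^ i * real (n choose i)) *\<^sub>R ((1 / fact n) *\<^sub>R (br x ^^ n) z)"
        using i by (simp add: binomial_fact field_simps)
      finally show "blinfun_apply (a i) (b (n - i)) = ((-1) ^ i * real (n choose i)) *\<^sub>R ((1 / fact n) *\<^sub>R (br x ^^ n) z)" .
    qed
    also have "\<dots> = (\<Sum>i\<le>n. (-1) ^ i * real (n choose i)) *\<^sub>R ((1 / fact n) *\<^sub>R (br x ^^ n) z)"
      by (rule scaleR_sum_left[symmetric])
    also have "\<dots> = (if n = 0 then z else 0)"
      using choose_alternating_sum[of n, where 'a=real] by auto
    finally show "(\<Sum>i\<le>n. blinfun_apply (a i) (b (n - i))) = (if n = 0 then z else 0)" .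
  qed
  ultimately have "(\<lambda>n. if n = 0 then z else 0) sums blinfun_apply (suminf a) (suminf b)" by simp
  then have 1: "blinfun_apply (suminf a) (suminf b) = z"
    using sums_single[of 0 "\<lambda>_. z"] sums_unique2 by force
  have "suminf b = E x z" by (simp add: b_def[abs_def] E_def)
  moreover have "blinfun_apply (suminf a) w = E (- x) w" for w
  proof -
    have "blinfun_apply (suminf a) w = (\<Sum>k. blinfun_apply (a k) w)"
      by (rule bounded_linear.suminf[OF blinfun.bounded_linear_left summable_norm_cancel[OF sa]])
    also have "\<dots> = E (- x) w"
      by (simp add: E_def ap pow_neg)
    finally show ?thesis .
  qed
  ultimately show ?thesis using 1 by simp
qed

lemma E_inj: "inj (E x)"
  by (metis E_inv injI)

lemma pow_central: "(\<And>u. br u c = 0) \<Longrightarrow> (br x ^^ Suc k) c = 0"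
  by (induction k) auto

lemma E_central: assumes "\<And>u. br u c = 0" shows "E x c = c"
proof -
  have "(\<lambda>k. (1 / fact k) *\<^sub>R (br x ^^ k) c) = (\<lambda>k. if k = 0 then c else 0)"
    by (rule ext, case_tac k) (use pow_central[OF assms] in auto)
  then show ?thesis unfolding E_def using sums_single[of 0 "\<lambda>_. c"] sums_unique
    by (metis (no_types))
qed

lemma E_shift: assumes "\<And>u. br c u = 0" shows "E (x + t *\<^sub>R c) = E x"
proof -
  have "br (x + t *\<^sub>R c) = br x" using assms by (auto simp: br_add_l br_scale_l)
  then show ?thesis by (simp add: E_def[abs_def])
qed

lemma E_functional:
  assumes "linear f" "\<And>u v. f (br u v) = (0::real)"
  shows "f (E x y) = f y"
proof -
  have bl: "bounded_linear f" using assms(1) linear_conv_bounded_linear by blast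
  have "f (E x y) = (\<Sum>k. f ((1 / fact k) *\<^sub>R (br x ^^ k) y))"
    unfolding E_def by (rule bounded_linear.suminf[OF bl summable_E])
  also have "(\<lambda>k. f ((1 / fact k) *\<^sub>R (br x ^^ k) y)) = (\<lambda>k. if k = 0 then f y else 0)"
  proof (rule ext)
    fix k show "f ((1 / fact k) *\<^sub>R (br x ^^ k) y) = (if k = 0 then f y else 0)"
      by (cases k) (auto simp: linear_scale[OF assms(1)] assms(2))
  qed
  finally show ?thesis using sums_single[of 0 "\<lambda>_. f y"] sums_unique by (metis (no_types))
qed

end


definition slotlin :: "(nat \<Rightarrow> 'c::real_vector list \<Rightarrow> 'b::real_vector) \<Rightarrow> bool" where
  "slotlin M \<longleftrightarrow> (\<forall>n xs i. length xs = n \<and> i < n \<longrightarrow> linear (\<lambda>v. M n (xs[i := v])))"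

definition mbound :: "(nat \<Rightarrow> 'c::real_normed_vector list \<Rightarrow> 'b::real_normed_vector) \<Rightarrow> real \<Rightarrow> real \<Rightarrow> bool" where
  "mbound M C K \<longleftrightarrow> (\<forall>n xs. length xs = n \<longrightarrow> norm (M n xs) \<le> C * K ^ n / fact n * prod_list (map norm xs))"

definition goodM :: "(nat \<Rightarrow> 'c::real_normed_vector list \<Rightarrow> 'b::real_normed_vector) \<Rightarrow> bool" where
  "goodM M \<longleftrightarrow> slotlin M \<and> (\<exists>C K. 0 \<le> C \<and> 0 \<le> K \<and> mbound M C K)"

definition Ssum :: "(nat \<Rightarrow> 'c list \<Rightarrow> 'b::real_normed_vector) \<Rightarrow> 'c \<Rightarrow> 'b" where
  "Ssum M z = (\<Sum>n. M n (replicate n z))"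

definition ins :: "nat \<Rightarrow> 'c \<Rightarrow> 'c list \<Rightarrow> 'c list" where
  "ins i v zs = take i zs @ v # drop i zs"

definition dM :: "'c \<Rightarrow> (nat \<Rightarrow> 'c list \<Rightarrow> 'b::real_vector) \<Rightarrow> nat \<Rightarrow> 'c list \<Rightarrow> 'b" where
  "dM v M m zs = (\<Sum>i\<le>m. M (Suc m) (ins i v zs))"

definition Tn :: "(nat \<Rightarrow> 'c list \<Rightarrow> 'b::real_vector) \<Rightarrow> 'c \<Rightarrow> 'c \<Rightarrow> nat \<Rightarrow> 'b" where
  "Tn M z h n = (\<Sum>i<n. M n ((replicate n z)[i := h]))"

lemma slot_zero:
  assumes "slotlin M" "length xs = n" "i < n" "xs ! i = 0"
  shows "M n xs = 0"
proof -
  have "linear (\<lambda>v. M n (xs[i := v]))" using assms unfolding slotlin_def by blast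
  from linear_0[OF this] show ?thesis using assms by (metis list_update_id)
qed

lemma slot_diff:
  assumes "slotlin M" "length xs = n" "i < n"
  shows "M n (xs[i := a]) - M n (xs[i := b]) = M n (xs[i := a - b])"
proof -
  have "linear (\<lambda>v. M n (xs[i := v]))" using assms unfolding slotlin_def by blast
  from linear_diff[OF this] show ?thesis by simp
qed

lemma mix_nth:
  assumes "length A = n" "length B = n" "k < n"
  shows "(take j A @ drop j B) ! k = (if k < j then A ! k else B ! k)"
  using assms by (auto simp: nth_append min_def)

lemma mix_Suc:
  assumes "length A = n" "length B = n" "i < n"
  shows "take (Suc i) A @ drop (Suc i) B = (take i A @ drop i B)[i := A ! i]"
proof (rule nth_equalityI)
  show "length (take (Suc i) A @ drop (Suc i) B) = length ((take i A @ drop i B)[i := A ! i])"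
    using assms by simp
  fix k assume "k < length (take (Suc i) A @ drop (Suc i) B)"
  then have k: "k < n" using assms by simp
  show "(take (Suc i) A @ drop (Suc i) B) ! k = (take i A @ drop i B)[i := A ! i] ! k"
    using k assms by (simp add: mix_nth[OF assms(1,2) k] nth_list_update)
qed

lemma mix_same:
  assumes "length A = n" "length B = n" "i < n"
  shows "(take i A @ drop i B)[i := B ! i] = take i A @ drop i B"
proof -
  have "(take i A @ drop i B) ! i = B ! i" using mix_nth[OF assms] by simp
  then show ?thesis by (metis list_update_id)
qed

lemma telescope:
  assumes "slotlin M" "length A = n" "length B = n"
  shows "M n A - M n B = (\<Sum>i<n. M n ((take i A @ drop i B)[i := A ! i - B ! i]))"
proof -
  define f where "f i = M n (take i A @ drop i B)" for i
  have "(\<Sum>i<n. f (Suc i) - f i) = f n - f 0" by (rule sum_lessThan_telescope)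
  moreover have "f n = M n A" "f 0 = M n B" using assms by (auto simp: f_def)
  moreover have "f (Suc i) - f i = M n ((take i A @ drop i B)[i := A ! i - B ! i])" if "i < n" for i
  proof -
    have l: "length (take i A @ drop i B) = n" using assms that by auto
    have "f (Suc i) - f i = M n ((take i A @ drop i B)[i := A ! i]) - M n ((take i A @ drop i B)[i := B ! i])"
      unfolding f_def using mix_Suc[OF assms(2,3) that] mix_same[OF assms(2,3) that] by simp
    also have "\<dots> = M n ((take i A @ drop i B)[i := A ! i - B ! i])"
      by (rule slot_diff[OF assms(1) l that])
    finally show ?thesis .
  qed
  ultimately show ?thesis by simp
qed

lemma prod_bound:
  fixes ws :: "'c::real_normed_vector list"
  assumes "length ws = n" "J \<subseteq> {..<n}" "\<And>k. k < n \<Longrightarrow> k \<notin> J \<Longrightarrow> norm (ws ! k) \<le> t"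
    "\<And>k. k \<in> J \<Longrightarrow> norm (ws ! k) \<le> s" "0 \<le> s" "1 \<le> t"
  shows "prod_list (map norm ws) \<le> s ^ card J * t ^ n"
proof -
  have fJ: "finite J" using assms(2) finite_subset by blast
  have "prod_list (map norm ws) = (\<Prod>k\<in>{..<n}. norm (ws ! k))"
    using assms(1) by (simp add: prod.list_conv_set_nth atLeast0LessThan)
  also have "\<dots> = (\<Prod>k\<in>J. norm (ws ! k)) * (\<Prod>k\<in>{..<n} - J. norm (ws ! k))"
    using prod.subset_diff[OF assms(2)] by (simp add: mult.commute)
  also have "\<dots> \<le> s ^ card J * t ^ card ({..<n} - J)"
  proof (rule mult_mono)
    show "(\<Prod>k\<in>J. norm (ws ! k)) \<le> s ^ card J"
      using prod_mono[of J "\<lambda>k. norm (ws ! k)" "\<lambda>_. s"] assms(4) by (simp add: prod_constant)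
    show "(\<Prod>k\<in>{..<n} - J. norm (ws ! k)) \<le> t ^ card ({..<n} - J)"
      using prod_mono[of "{..<n} - J" "\<lambda>k. norm (ws ! k)" "\<lambda>_. t"] assms(3) by (simp add: prod_constant)
  qed (use assms(5) in \<open>auto intro: prod_nonneg\<close>)
  also have "\<dots> \<le> s ^ card J * t ^ n"
    using assms(5,6) by (intro mult_left_mono power_increasing) (auto simp: card_Diff_subset[OF fJ assms(2)])
  finally show ?thesis .
qed

lemma summable_fact_bound:
  fixes C K t :: real
  assumes "0 \<le> C" "0 \<le> K" "0 \<le> t"
  shows "summable (\<lambda>n. real n * real n * (C * K ^ n / fact n) * t ^ n)"
proof (rule summable_comparison_test[OF exI[of _ 0]])
  show "summable (\<lambda>n. C * (inverse (fact n) * (4 * K * t) ^ n))"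
    by (intro summable_mult summable_exp)
  show "\<forall>n\<ge>0. norm (real n * real n * (C * K ^ n / fact n) * t ^ n) \<le> C * (inverse (fact n) * (4 * K * t) ^ n)"
  proof (intro allI impI)
    fix n :: nat
    have "real n \<le> 2 ^ n" using less_exp[of n] by (metis of_nat_le_iff of_nat_numeral of_nat_power less_imp_le)
    then have "real n * real n \<le> 2 ^ n * 2 ^ n" by (intro mult_mono) auto
    also have "(2::real) ^ n * 2 ^ n = 4 ^ n" by (simp add: power_mult_distrib[symmetric])
    finally have nn: "real n * real n \<le> 4 ^ n" .
    have "norm (real n * real n * (C * K ^ n / fact n) * t ^ n) = real n * real n * ((C * K ^ n / fact n) * t ^ n)"
      using assms by (simp add: abs_mult)
    also have "\<dots> \<le> 4 ^ n * ((C * K ^ n / fact n) * t ^ n)"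
      using assms by (intro mult_right_mono nn) auto
    also have "\<dots> = C * (inverse (fact n) * (4 * K * t) ^ n)"
      by (simp add: field_simps power_mult_distrib)
    finally show "norm (real n * real n * (C * K ^ n / fact n) * t ^ n) \<le> C * (inverse (fact n) * (4 * K * t) ^ n)" .
  qed
qed



lemma slotlinD: assumes "slotlin M" "length xs = n" "i < n" shows "linear (\<lambda>v. M n (xs[i := v]))"
  using spec[OF spec[OF spec[OF assms(1)[unfolded slotlin_def], of n], of xs], of i] assms(2,3) by simp

lemma mboundD: assumes "mbound M C K" "length xs = n" shows "norm (M n xs) \<le> C * K ^ n / fact n * prod_list (map norm xs)"
  using spec[OF spec[OF assms(1)[unfolded mbound_def], of n], of xs] assms(2) by simp

lemma lin_sum: "(\<And>a. a \<in> S \<Longrightarrow> linear (f a)) \<Longrightarrow> linear (\<lambda>x. \<Sum>a\<in>S. f a x)"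
  by (rule linear_compose_sum) auto

lemma Tn_linear: "slotlin M \<Longrightarrow> linear (\<lambda>h. Tn M z h n)"
  unfolding Tn_def by (rule lin_sum) (auto intro: slotlinD)

lemma norm_M_rep:
  assumes "mbound M C K"
  shows "norm (M n (replicate n z)) \<le> C * K ^ n / fact n * norm z ^ n"
  using mboundD[OF assms, of "replicate n z" n] by (simp add: prod_list_replicate)

lemma summable_Ssum:
  fixes M :: "nat \<Rightarrow> 'c::real_normed_vector list \<Rightarrow> 'b::banach"
  assumes "mbound M C K" "0 \<le> C" "0 \<le> K"
  shows "summable (\<lambda>n. M n (replicate n z))"
proof (rule summable_comparison_test[OF exI[of _ 0]])
  show "summable (\<lambda>n. C * (inverse (fact n) * (K * norm z) ^ n))"
    by (intro summable_mult summable_exp)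
  show "\<forall>n\<ge>0. norm (M n (replicate n z)) \<le> C * (inverse (fact n) * (K * norm z) ^ n)"
    using norm_M_rep[OF assms(1)] by (simp add: field_simps power_mult_distrib)
qed

lemma norm_Tn:
  assumes "mbound M C K" "0 \<le> C" "0 \<le> K" "norm z \<le> t" "1 \<le> t"
  shows "norm (Tn M z h n) \<le> real n * real n * (C * K ^ n / fact n) * t ^ n * norm h"
proof -
  have "norm (Tn M z h n) \<le> (\<Sum>i<n. norm (M n ((replicate n z)[i := h])))"
    unfolding Tn_def by (rule norm_sum)
  also have "\<dots> \<le> (\<Sum>i<n. C * K ^ n / fact n * (norm h ^ card {i} * t ^ n))"
  proof (rule sum_mono)
    fix i assume i: "i \<in> {..<n}"
    have "norm (M n ((replicate n z)[i := h])) \<le> C * K ^ n / fact n * prod_list (map norm ((replicate n z)[i := h]))"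
      using mboundD[OF assms(1), of "(replicate n z)[i := h]" n] by simp
    also have "\<dots> \<le> C * K ^ n / fact n * (norm h ^ card {i} * t ^ n)"
      using i assms by (intro mult_left_mono prod_bound[where n=n]) (auto simp: nth_list_update)
    finally show "norm (M n ((replicate n z)[i := h])) \<le> C * K ^ n / fact n * (norm h ^ card {i} * t ^ n)" .
  qed
  also have "\<dots> = real n * (C * K ^ n / fact n) * t ^ n * norm h" by simp
  also have "\<dots> \<le> real n * real n * (C * K ^ n / fact n) * t ^ n * norm h"
  proof -
    have "real n \<le> real n * real n" by (cases n) auto
    moreover have "0 \<le> C * K ^ n / fact n * t ^ n * norm h" using assms by simp
    ultimately have "real n * (C * K ^ n / fact n * t ^ n * norm h) \<le> real n * real n * (C * K ^ n / fact n * t ^ n * norm h)"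
      by (rule mult_right_mono)
    then show ?thesis by (simp add: mult.assoc)
  qed
  finally show ?thesis .
qed

lemma summable_Tn:
  fixes M :: "nat \<Rightarrow> 'c::real_normed_vector list \<Rightarrow> 'b::banach"
  assumes "mbound M C K" "0 \<le> C" "0 \<le> K"
  shows "summable (\<lambda>n. Tn M z h n)"
proof (rule summable_comparison_test[OF exI[of _ 0]])
  let ?t = "norm z + 1"
  show "summable (\<lambda>n. real n * real n * (C * K ^ n / fact n) * ?t ^ n * norm h)"
    by (intro summable_mult2 summable_fact_bound) (use assms in auto)
  show "\<forall>n\<ge>0. norm (Tn M z h n) \<le> real n * real n * (C * K ^ n / fact n) * ?t ^ n * norm h"
    using norm_Tn[OF assms] by auto
qed

lemma norm_Rn:
  assumes "slotlin M" "mbound M C K" "0 \<le> C" "0 \<le> K" "norm z + norm h \<le> t" "1 \<le> t"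
  shows "norm (M n (replicate n (z + h)) - M n (replicate n z) - Tn M z h n)
     \<le> real n * real n * (C * K ^ n / fact n) * t ^ n * norm h ^ 2"
proof -
  define A where "A = replicate n (z + h)"
  define B where "B = replicate n z"
  define mx where "mx i = take i A @ drop i B" for i
  have lA: "length A = n" and lB: "length B = n" by (auto simp: A_def B_def)
  have lmx: "length (mx i) = n" for i by (auto simp: mx_def lA lB)
  have "M n A - M n B = (\<Sum>i<n. M n ((mx i)[i := h]))"
    unfolding telescope[OF assms(1) lA lB] mx_def by (rule sum.cong) (auto simp: A_def B_def)
  then have eq: "M n A - M n B - Tn M z h n = (\<Sum>i<n. M n ((mx i)[i := h]) - M n (B[i := h]))"
    by (simp add: Tn_def B_def sum_subtractf)
  have inner: "norm (M n ((mx i)[i := h]) - M n (B[i := h])) \<le> real n * (C * K ^ n / fact n * (norm h ^ 2 * t ^ n))"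
    if i: "i < n" for i
  proof -
    define A' where "A' = (mx i)[i := h]"
    define B' where "B' = B[i := h]"
    have lA': "length A' = n" and lB': "length B' = n" by (auto simp: A'_def B'_def lmx lB)
    have A'n: "A' ! k = (if k = i then h else if k < i then z + h else z)" if "k < n" for k
      using that lA lB by (auto simp: A'_def mx_def nth_list_update mix_nth A_def B_def nth_append min_def)
    have B'n: "B' ! k = (if k = i then h else z)" if "k < n" for k
      using that by (auto simp: B'_def nth_list_update B_def)
    have "norm (M n A' - M n B') \<le> (\<Sum>j<n. norm (M n ((take j A' @ drop j B')[j := A' ! j - B' ! j])))"
      unfolding telescope[OF assms(1) lA' lB'] by (rule norm_sum)
    also have "\<dots> \<le> (\<Sum>j<n. C * K ^ n / fact n * (norm h ^ 2 * t ^ n))"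
    proof (rule sum_mono)
      fix j assume j: "j \<in> {..<n}"
      define w where "w = (take j A' @ drop j B')[j := A' ! j - B' ! j]"
      have lw: "length w = n" by (simp add: w_def lA' lB')
      have wn: "w ! k = (if k = j then A' ! j - B' ! j else if k < j then A' ! k else B' ! k)" if "k < n" for k
        using that j lA' lB' by (auto simp: w_def nth_list_update mix_nth[OF lA' lB'])
      show "norm (M n w) \<le> C * K ^ n / fact n * (norm h ^ 2 * t ^ n)"
      proof (cases "j < i")
        case True
        have "prod_list (map norm w) \<le> norm h ^ card {i, j} * t ^ n"
        proof (rule prod_bound[OF lw])
          show "{i, j} \<subseteq> {..<n}" using i j by auto
          show "norm (w ! k) \<le> t" if "k < n" "k \<notin> {i, j}" for k
          proof -
            have "norm z \<le> t" "norm (z + h) \<le> t"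
              using assms(5) norm_triangle_ineq[of z h] norm_ge_zero[of h] by linarith+
            then show ?thesis using that True by (auto simp: wn A'n B'n)
          qed
          show "norm (w ! k) \<le> norm h" if "k \<in> {i, j}" for k
            using that True i j by (auto simp: wn A'n B'n)
        qed (use assms in auto)
        also have "card {i, j} = 2" using True by auto
        finally have pb: "prod_list (map norm w) \<le> norm h ^ 2 * t ^ n" .
        have X: "0 \<le> C * K ^ n / fact n" using assms by simp
        have "norm (M n w) \<le> C * K ^ n / fact n * prod_list (map norm w)"
          using mboundD[OF assms(2) lw] by simp
        also have "\<dots> \<le> C * K ^ n / fact n * (norm h ^ 2 * t ^ n)"
          by (rule mult_left_mono[OF pb X])
        finally show ?thesis .
      next
        case False
        have "w ! j = 0" using False j i by (auto simp: wn A'n B'n)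
        then have "M n w = 0" using slot_zero[OF assms(1) lw] j by auto
        then show ?thesis using assms by auto
      qed
    qed
    also have "\<dots> = real n * (C * K ^ n / fact n * (norm h ^ 2 * t ^ n))" by simp
    finally show ?thesis by (simp add: A'_def B'_def)
  qed
  have "norm (M n A - M n B - Tn M z h n) \<le> (\<Sum>i<n. norm (M n ((mx i)[i := h]) - M n (B[i := h])))"
    unfolding eq by (rule norm_sum)
  also have "\<dots> \<le> (\<Sum>i<n. real n * (C * K ^ n / fact n * (norm h ^ 2 * t ^ n)))"
    by (rule sum_mono) (use inner in auto)
  also have "\<dots> = real n * real n * (C * K ^ n / fact n) * t ^ n * norm h ^ 2" by simp
  finally show ?thesis unfolding A_def B_def .
qed



lemma linear_suminf':
  fixes f :: "nat \<Rightarrow> 'c::real_vector \<Rightarrow> 'd::{real_normed_vector}"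
  assumes "\<And>n. linear (f n)" "\<And>y. summable (\<lambda>n. f n y)"
  shows "linear (\<lambda>y. \<Sum>n. f n y)"
proof (rule linearI)
  fix b1 b2
  show "(\<Sum>n. f n (b1 + b2)) = (\<Sum>n. f n b1) + (\<Sum>n. f n b2)"
    using assms by (simp add: linear_add suminf_add)
next
  fix r b
  show "(\<Sum>n. f n (r *\<^sub>R b)) = r *\<^sub>R (\<Sum>n. f n b)"
    using assms by (simp add: linear_scale suminf_scaleR_right)
qed

lemma goodD:
  assumes "goodM M"
  obtains C K where "0 \<le> C" "0 \<le> K" "mbound M C K" "slotlin M"
  using assms unfolding goodM_def by blast

lemma Ssum_deriv:
  fixes M :: "nat \<Rightarrow> 'c::euclidean_space list \<Rightarrow> 'b::banach"
  assumes "goodM M"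
  shows "(Ssum M has_derivative (\<lambda>h. \<Sum>n. Tn M z h n)) (at z)"
proof -
  obtain C K where CK: "0 \<le> C" "0 \<le> K" "mbound M C K" and sl: "slotlin M"
    using assms by (rule goodD)
  define t where "t = norm z + 1"
  have t1: "1 \<le> t" by (simp add: t_def)
  define g where "g n = real n * real n * (C * K ^ n / fact n) * t ^ n" for n
  have sg: "summable g" unfolding g_def by (rule summable_fact_bound) (use CK t1 in auto)
  define G where "G = suminf g"
  have G0: "0 \<le> G" unfolding G_def using CK t1 by (intro suminf_nonneg[OF sg]) (auto simp: g_def)
  have lin: "linear (\<lambda>h. \<Sum>n. Tn M z h n)"
    by (rule linear_suminf') (use Tn_linear[OF sl] summable_Tn[OF CK(3,1,2)] in auto)
  show ?thesis
    unfolding has_derivative_at_alt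
  proof (intro conjI allI impI)
    show "bounded_linear (\<lambda>h. \<Sum>n. Tn M z h n)"
      using lin linear_conv_bounded_linear by blast
    fix e :: real assume e: "0 < e"
    define d where "d = min 1 (e / (G + 1))"
    have d: "0 < d" using e G0 by (simp add: d_def)
    show "\<exists>d>0. \<forall>y. norm (y - z) < d \<longrightarrow> norm (Ssum M y - Ssum M z - (\<Sum>n. Tn M z (y - z) n)) \<le> e * norm (y - z)"
    proof (intro exI conjI allI impI)
      show "0 < d" by (rule d)
      fix y assume y: "norm (y - z) < d"
      define h where "h = y - z"
      have yz: "y = z + h" by (simp add: h_def)
      have s1: "norm h \<le> 1" using y by (simp add: h_def d_def)
      have sd: "norm h \<le> e / (G + 1)" using y by (simp add: h_def d_def)
      have tt: "norm z + norm h \<le> t" using s1 by (simp add: t_def)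
      have "Ssum M y - Ssum M z - (\<Sum>n. Tn M z h n) = (\<Sum>n. M n (replicate n (z + h)) - M n (replicate n z) - Tn M z h n)"
        unfolding Ssum_def yz
        by (simp add: suminf_diff summable_Ssum[OF CK(3,1,2)] summable_Tn[OF CK(3,1,2)] summable_diff)
      also have "norm \<dots> \<le> (\<Sum>n. g n * norm h ^ 2)"
      proof (rule norm_suminf_le)
        show "summable (\<lambda>n. g n * norm h ^ 2)" by (rule summable_mult2[OF sg])
      qed (use norm_Rn[OF sl CK(3,1,2) tt t1] in \<open>auto simp: g_def\<close>)
      also have "\<dots> = G * norm h * norm h" unfolding G_def suminf_mult2[OF sg, symmetric] by (simp add: power2_eq_square mult.assoc)
      also have "\<dots> \<le> e * norm h"
      proof (rule mult_right_mono)
        have "G * norm h \<le> G * (e / (G + 1))" by (rule mult_left_mono[OF sd G0])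
        also have "\<dots> \<le> e" using G0 e by (simp add: field_simps)
        finally show "G * norm h \<le> e" .
      qed simp
      finally show "norm (Ssum M y - Ssum M z - (\<Sum>n. Tn M z (y - z) n)) \<le> e * norm (y - z)"
        by (simp add: h_def)
    qed
  qed
qed

lemma ins_rep: assumes "i \<le> m" shows "ins i h (replicate m z) = (replicate (Suc m) z)[i := h]"
proof -
  have "Suc m = i + Suc (m - i)" using assms by simp
  then have "replicate (Suc m) z = replicate i z @ replicate (Suc (m - i)) z" by (metis replicate_add)
  then show ?thesis using assms by (simp add: ins_def list_update_append)
qed

lemma Ssum_dM:
  fixes M :: "nat \<Rightarrow> 'c::euclidean_space list \<Rightarrow> 'b::banach"
  assumes "goodM M"
  shows "Ssum (dM h M) z = (\<Sum>n. Tn M z h n)"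
proof -
  obtain C K where CK: "0 \<le> C" "0 \<le> K" "mbound M C K" and sl: "slotlin M"
    using assms by (rule goodD)
  have "dM h M m (replicate m z) = Tn M z h (Suc m)" for m
    unfolding dM_def Tn_def lessThan_Suc_atMost by (rule sum.cong) (auto simp: ins_rep)
  then have "Ssum (dM h M) z = (\<Sum>m. Tn M z h (Suc m))" by (simp add: Ssum_def)
  also have "\<dots> = (\<Sum>n. Tn M z h n) - Tn M z h 0"
    by (rule suminf_split_head[OF summable_Tn[OF CK(3,1,2)]])
  finally show ?thesis by (simp add: Tn_def)
qed

lemma ins_update:
  assumes "i \<le> length zs" "j < length zs"
  shows "ins i v (zs[j := u]) = (ins i v zs)[(if j < i then j else Suc j) := u]"
  by (rule nth_equalityI) (use assms in \<open>auto simp: ins_def nth_append nth_list_update min_def nth_Cons'\<close>)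

lemma prod_ins: "prod_list (map norm (ins i v zs)) = norm v * prod_list (map norm zs)"
proof -
  have "prod_list (map norm zs) = prod_list (map norm (take i zs)) * prod_list (map norm (drop i zs))"
    by (metis append_take_drop_id map_append prod_list.append)
  then show ?thesis by (simp add: ins_def)
qed

lemma good_dM:
  fixes M :: "nat \<Rightarrow> 'c::real_normed_vector list \<Rightarrow> 'b::real_normed_vector"
  assumes "goodM M"
  shows "goodM (dM v M)"
proof -
  obtain C K where CK: "0 \<le> C" "0 \<le> K" "mbound M C K" and sl: "slotlin M"
    using assms by (rule goodD)
  have "slotlin (dM v M)"
    unfolding slotlin_def
  proof (intro allI impI)
    fix m j and zs :: "'c list" assume a: "length zs = m \<and> j < m"
    show "linear (\<lambda>u::'c. dM v M m (zs[j := u]))"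
      unfolding dM_def
    proof (rule lin_sum)
      fix i assume i: "i \<in> {..m}"
      have "(\<lambda>u. M (Suc m) (ins i v (zs[j := u]))) = (\<lambda>u. M (Suc m) ((ins i v zs)[(if j < i then j else Suc j) := u]))"
        using a i by (simp add: ins_update)
      moreover have "linear (\<lambda>u. M (Suc m) ((ins i v zs)[(if j < i then j else Suc j) := u]))"
        by (rule slotlinD[OF sl]) (use a i in \<open>auto simp: ins_def\<close>)
      ultimately show "linear (\<lambda>u. M (Suc m) (ins i v (zs[j := u])))" by simp
    qed
  qed
  moreover have "mbound (dM v M) (C * K * norm v) K"
    unfolding mbound_def
  proof (intro allI impI)
    fix m and zs :: "'c list" assume l: "length zs = m"
    have "norm (dM v M m zs) \<le> (\<Sum>i\<le>m. norm (M (Suc m) (ins i v zs)))"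
      unfolding dM_def by (rule norm_sum)
    also have "\<dots> \<le> (\<Sum>i\<le>m. C * K ^ Suc m / fact (Suc m) * (norm v * prod_list (map norm zs)))"
    proof (rule sum_mono)
      fix i assume "i \<in> {..m}"
      have "length (ins i v zs) = Suc m" using l by (simp add: ins_def)
      from mboundD[OF CK(3) this] show "norm (M (Suc m) (ins i v zs)) \<le> C * K ^ Suc m / fact (Suc m) * (norm v * prod_list (map norm zs))"
        by (simp only: prod_ins)
    qed
    also have "\<dots> = real (Suc m) * (C * K ^ Suc m / fact (Suc m) * (norm v * prod_list (map norm zs)))"
      by simp
    also have "\<dots> = C * K * norm v * K ^ m / fact m * prod_list (map norm zs)"
    proof -
      have "0 < (fact m :: real)" by simp
      moreover have "0 \<le> (fact m :: real) * real m" by simp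
      ultimately have nz: "(fact m :: real) + fact m * real m \<noteq> 0" by linarith
      show ?thesis using nz by (simp add: field_simps)
    qed
    finally show "norm (dM v M m zs) \<le> C * K * norm v * K ^ m / fact m * prod_list (map norm zs)" .
  qed
  ultimately show ?thesis unfolding goodM_def using CK by (intro conjI exI[of _ "C * K * norm v"] exI[of _ K]) auto
qed

fun Mk :: "(nat \<Rightarrow> 'c list \<Rightarrow> 'b::real_vector) \<Rightarrow> 'c list \<Rightarrow> nat \<Rightarrow> 'c list \<Rightarrow> 'b" where
  "Mk M [] = M"
| "Mk M (v # vs) = dM v (Mk M vs)"

lemma good_Mk: "goodM M \<Longrightarrow> goodM (Mk M vs)"
  by (induction vs) (auto intro: good_dM)

lemma smooth_Ssum:
  fixes M :: "nat \<Rightarrow> 'c::euclidean_space list \<Rightarrow> 'b::{banach,real_normed_vector}"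
  assumes "goodM M"
  shows "smooth_map (Ssum M)"
  unfolding smooth_map_def
proof (intro exI[of _ "\<lambda>k z vs. Ssum (Mk M vs) z"] conjI allI impI)
  fix x show "Ssum (Mk M []) x = Ssum M x" by simp
next
  fix k vs x assume "length (vs :: 'c list) = k"
  have g: "goodM (Mk M vs)" by (rule good_Mk[OF assms])
  have "(\<lambda>v. Ssum (Mk M (v # vs)) x) = (\<lambda>h. \<Sum>n. Tn (Mk M vs) x h n)"
    by (rule ext) (simp add: Ssum_dM[OF g])
  then show "((\<lambda>y. Ssum (Mk M vs) y) has_derivative (\<lambda>v. Ssum (Mk M (v # vs)) x)) (at x)"
    using Ssum_deriv[OF g, of x] by simp
qed

lemma smooth_add:
  assumes "smooth_map f" "smooth_map g"
  shows "smooth_map (\<lambda>z. f z + g z)"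
proof -
  obtain D1 where D1: "\<forall>x. D1 0 x [] = f x" "\<forall>k vs x. length vs = k \<longrightarrow>
          ((\<lambda>y. D1 k y vs) has_derivative (\<lambda>v. D1 (Suc k) x (v # vs))) (at x)"
    using assms(1) unfolding smooth_map_def by blast
  obtain D2 where D2: "\<forall>x. D2 0 x [] = g x" "\<forall>k vs x. length vs = k \<longrightarrow>
          ((\<lambda>y. D2 k y vs) has_derivative (\<lambda>v. D2 (Suc k) x (v # vs))) (at x)"
    using assms(2) unfolding smooth_map_def by blast
  show ?thesis unfolding smooth_map_def
    by (rule exI[of _ "\<lambda>k x vs. D1 k x vs + D2 k x vs"]) (use D1 D2 in \<open>auto intro: has_derivative_add\<close>)
qed


context LLA begin

lemma comp_lin_y: "linear (\<lambda>y. foldr br ws y)"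
proof (induction ws)
  case Nil then show ?case by (simp add: linear_id[unfolded id_def])
next
  case (Cons w ws)
  then show ?case using linear_compose[OF Cons lin_r[of w]] by (simp add: o_def)
qed

lemma comp_slot: "j < length ws \<Longrightarrow> linear (\<lambda>v. foldr br (ws[j := v]) y)"
proof (induction ws arbitrary: j)
  case Nil then show ?case by simp
next
  case (Cons w ws)
  show ?case
  proof (cases j)
    case 0 then show ?thesis by (simp add: lin_l)
  next
    case (Suc j')
    then have "j' < length ws" using Cons by simp
    from linear_compose[OF Cons.IH[OF this] lin_r[of w]] show ?thesis by (simp add: Suc o_def)
  qed
qed

lemma comp_zero: "j < length ws \<Longrightarrow> ws ! j = 0 \<Longrightarrow> foldr br ws y = 0"
  using linear_0[OF comp_slot[of j ws y]] by (metis list_update_id)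

lemma comp_norm: "norm (foldr br ws y) \<le> BB ^ length ws * prod_list (map norm ws) * norm y"
proof (induction ws)
  case Nil then show ?case by simp
next
  case (Cons w ws)
  have "norm (foldr br (w # ws) y) \<le> norm w * norm (foldr br ws y) * BB" by (simp add: BB)
  also have "\<dots> \<le> norm w * (BB ^ length ws * prod_list (map norm ws) * norm y) * BB"
    using Cons BB(1) by (intro mult_right_mono mult_left_mono) auto
  also have "\<dots> = BB ^ length (w # ws) * prod_list (map norm (w # ws)) * norm y" by (simp add: algebra_simps)
  finally show ?case .
qed

definition ME :: "nat \<Rightarrow> ('a \<times> 'a) list \<Rightarrow> 'a" where
  "ME n zs = (if n = 0 then 0 else (1 / fact (n - 1)) *\<^sub>R foldr br (map fst (take (n - 1) zs)) (snd (zs ! (n - 1))))"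

lemma ME_Suc: "ME (Suc m) zs = (1 / fact m) *\<^sub>R foldr br (map fst (take m zs)) (snd (zs ! m))"
  by (simp add: ME_def)

lemma Ssum_ME: "Ssum ME (x, y) = E x y"
proof -
  have "(\<lambda>n. ME (Suc n) (replicate (Suc n) (x, y))) = (\<lambda>k. (1 / fact k) *\<^sub>R (br x ^^ k) y)"
    by (rule ext) (simp add: ME_Suc take_replicate min_def del: replicate_Suc)
  then have "(\<lambda>n. ME (Suc n) (replicate (Suc n) (x, y))) sums E x y" using sums_E by simp
  then have "(\<lambda>n. ME n (replicate n (x, y))) sums (E x y + ME 0 (replicate 0 (x, y)))"
    using sums_Suc_iff[of "\<lambda>n. ME n (replicate n (x, y))"] by blast
  then have "(\<lambda>n. ME n (replicate n (x, y))) sums E x y" by (simp add: ME_def)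
  then show ?thesis unfolding Ssum_def by (simp add: sums_iff)
qed

lemma lin_fst: "linear fst" by (rule linearI) auto
lemma lin_snd: "linear snd" by (rule linearI) auto

lemma slotlin_ME: "slotlin ME"
  unfolding slotlin_def
proof (intro allI impI)
  fix n and xs :: "('a \<times> 'a) list" and i assume a: "length xs = n \<and> i < n"
  then obtain m where n: "n = Suc m" by (cases n) auto
  show "linear (\<lambda>v. ME n (xs[i := v]))"
  proof (cases "i < m")
    case True
    have eq: "(\<lambda>v. ME n (xs[i := v])) = (\<lambda>u. (1 / fact m) *\<^sub>R foldr br ((map fst (take m xs))[i := u]) (snd (xs ! m))) \<circ> fst"
      using True a n by (auto simp: ME_Suc take_update_swap map_update nth_list_update)
    show ?thesis unfolding eq
      by (rule linear_compose[OF lin_fst linear_compose_scale_right[OF comp_slot]]) (use True a n in auto)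
  next
    case False
    then have im: "i = m" using a n by simp
    have eq: "(\<lambda>v. ME n (xs[i := v])) = (\<lambda>u. (1 / fact m) *\<^sub>R foldr br (map fst (take m xs)) u) \<circ> snd"
      using im a n by (auto simp: ME_Suc)
    show ?thesis unfolding eq
      by (rule linear_compose[OF lin_snd linear_compose_scale_right[OF comp_lin_y]])
  qed
qed

lemma prod_fst_le: "prod_list (map norm (map fst L)) \<le> prod_list (map norm (L :: ('a \<times> 'a) list))"
proof (induction L)
  case Nil then show ?case by simp
next
  case (Cons l L)
  have "0 \<le> prod_list (map (norm \<circ> fst) L)" by (rule prod_list_nonneg) auto
  then have "norm (fst l) * prod_list (map (norm \<circ> fst) L) \<le> norm l * prod_list (map norm L)"
    using Cons by (intro mult_mono) (auto, metis norm_fst_le prod.collapse)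
  then show ?case by simp
qed

lemma mbound_ME: "mbound ME 1 (2 * (BB + 1))"
  unfolding mbound_def
proof (intro allI impI)
  fix n and xs :: "('a \<times> 'a) list" assume l: "length xs = n"
  show "norm (ME n xs) \<le> 1 * (2 * (BB + 1)) ^ n / fact n * prod_list (map norm xs)"
  proof (cases n)
    case 0
    have "0 \<le> prod_list (map norm xs)" by (rule prod_list_nonneg) auto
    then show ?thesis using 0 by (simp add: ME_def)
  next
    case (Suc m)
    have xs: "xs = take m xs @ [xs ! m]" using l Suc
      using take_Suc_conv_app_nth[of m xs] by simp
    have P: "prod_list (map norm xs) = prod_list (map norm (take m xs)) * norm (xs ! m)"
      by (subst xs) simp
    have "norm (ME n xs) = (1 / fact m) * norm (foldr br (map fst (take m xs)) (snd (xs ! m)))"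
      by (simp add: Suc ME_Suc)
    also have "\<dots> \<le> (1 / fact m) * (BB ^ m * prod_list (map norm xs))"
    proof (rule mult_left_mono)
      have lt: "length (map fst (take m xs)) = m" using l Suc by simp
      have "norm (foldr br (map fst (take m xs)) (snd (xs ! m))) \<le> BB ^ m * prod_list (map norm (map fst (take m xs))) * norm (snd (xs ! m))"
        using comp_norm[of "map fst (take m xs)" "snd (xs ! m)"] lt by simp
      also have "\<dots> \<le> BB ^ m * (prod_list (map norm (take m xs)) * norm (xs ! m))"
      proof -
        have s: "norm (snd (xs ! m)) \<le> norm (xs ! m)" by (metis norm_snd_le prod.collapse)
        have p0: "0 \<le> prod_list (map norm (take m xs))" by (rule prod_list_nonneg) auto
        have "prod_list (map norm (map fst (take m xs))) * norm (snd (xs ! m)) \<le> prod_list (map norm (take m xs)) * norm (xs ! m)"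
          by (rule mult_mono[OF prod_fst_le s p0]) simp
        then show ?thesis using BB(1) by (simp add: mult.assoc mult_left_mono)
      qed
      finally show "norm (foldr br (map fst (take m xs)) (snd (xs ! m))) \<le> BB ^ m * prod_list (map norm xs)"
        by (simp add: P)
    qed simp
    also have "\<dots> \<le> 1 * (2 * (BB + 1)) ^ n / fact n * prod_list (map norm xs)"
    proof -
      have "real (Suc m) \<le> 2 ^ Suc m" using less_exp[of "Suc m"]
        by (metis less_imp_le of_nat_le_iff of_nat_numeral of_nat_power)
      moreover have "BB ^ m \<le> (BB + 1) ^ Suc m"
      proof -
        have "BB ^ m \<le> (BB + 1) ^ m" using BB(1) by (intro power_mono) auto
        also have "\<dots> \<le> (BB + 1) ^ Suc m" using BB(1) by (intro power_increasing) auto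
        finally show ?thesis .
      qed
      ultimately have "real (Suc m) * BB ^ m \<le> 2 ^ Suc m * (BB + 1) ^ Suc m"
        using BB(1) by (intro mult_mono) auto
      then have "real (Suc m) * BB ^ m \<le> (2 * (BB + 1)) ^ Suc m" by (simp only: power_mult_distrib)
      then have "BB ^ m / fact m \<le> (2 * (BB + 1)) ^ Suc m / fact (Suc m)"
        by (simp add: field_simps del: of_nat_Suc)
      then have "BB ^ m / fact m * prod_list (map norm xs) \<le> (2 * (BB + 1)) ^ Suc m / fact (Suc m) * prod_list (map norm xs)"
      proof (rule mult_right_mono)
        show "0 \<le> prod_list (map norm xs)" by (rule prod_list_nonneg) auto
      qed
      then show ?thesis by (simp add: Suc mult.assoc)
    qed
    finally show ?thesis .
  qed
qed

lemma good_ME: "goodM ME"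
  unfolding goodM_def using slotlin_ME mbound_ME BB(1)
  by (intro conjI exI[of _ 1] exI[of _ "2 * (BB + 1)"]) auto

end


locale RK = LLA br for br :: "'a::euclidean_space \<Rightarrow> 'a \<Rightarrow> 'a" +
  fixes a :: 'a and \<xi> \<theta> :: "'a \<Rightarrow> real"
  assumes a_c: "\<And>u. br a u = 0" "\<And>u. br u a = 0"
    and lxi: "linear \<xi>" and lth: "linear \<theta>"
    and xi_br: "\<And>u v. \<xi> (br u v) = 0" and xi_a: "\<xi> a = 0"
    and th_br: "\<And>u v. \<theta> (br u v) = 0" and th_a: "\<theta> a \<ge> 0"
begin

definition rk :: "'a \<Rightarrow> 'a \<Rightarrow> 'a" where
  "rk x y = E x y + (\<xi> x * \<xi> x * \<theta> y) *\<^sub>R a"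

definition MC :: "nat \<Rightarrow> ('a \<times> 'a) list \<Rightarrow> 'a" where
  "MC n zs = (if n = 3 then (\<xi> (fst (zs ! 0)) * \<xi> (fst (zs ! 1)) * \<theta> (snd (zs ! 2))) *\<^sub>R a else 0)"

lemma Ssum_MC: "Ssum MC (x, y) = (\<xi> x * \<xi> x * \<theta> y) *\<^sub>R a"
proof -
  have "(\<lambda>n. MC n (replicate n (x, y))) = (\<lambda>n. if n = 3 then (\<xi> x * \<xi> x * \<theta> y) *\<^sub>R a else 0)"
    by (rule ext) (simp add: MC_def numeral_3_eq_3)
  then show ?thesis unfolding Ssum_def
    using sums_single[of 3 "\<lambda>_. (\<xi> x * \<xi> x * \<theta> y) *\<^sub>R a"] sums_unique by metis
qed

lemma lin_real_scale:
  assumes "linear (g :: 'c::real_vector \<Rightarrow> real)"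
  shows "linear (\<lambda>v. (g v * c) *\<^sub>R a)" "linear (\<lambda>v. (c * g v) *\<^sub>R a)" "linear (\<lambda>v. (c * g v * d) *\<^sub>R a)"
  by (rule linearI; simp add: linear_add[OF assms] linear_scale[OF assms] algebra_simps scaleR_add_left)+

lemma lin_xi_fst: "linear (\<lambda>v. \<xi> (fst v))"
  using linear_compose[OF lin_fst lxi] by (simp add: o_def)
lemma lin_th_snd: "linear (\<lambda>v. \<theta> (snd v))"
  using linear_compose[OF lin_snd lth] by (simp add: o_def)

lemma slotlin_MC: "slotlin MC"
  unfolding slotlin_def
proof (intro allI impI)
  fix n and xs :: "('a \<times> 'a) list" and i assume a: "length xs = n \<and> i < n"
  show "linear (\<lambda>v. MC n (xs[i := v]))"
  proof (cases "n = 3")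
    case False then show ?thesis by (simp add: MC_def linear_zero)
  next
    case True
    then have "i = 0 \<or> i = 1 \<or> i = 2" using a by auto
    then show ?thesis
    proof (elim disjE)
      assume i: "i = 0"
      show ?thesis using True a i lin_real_scale(1)[OF lin_xi_fst, of "\<xi> (fst (xs ! 1)) * \<theta> (snd (xs ! 2))"]
        by (simp add: MC_def nth_list_update mult.assoc)
    next
      assume i: "i = 1"
      show ?thesis using True a i lin_real_scale(3)[OF lin_xi_fst, of "\<xi> (fst (xs ! 0))" "\<theta> (snd (xs ! 2))"]
        by (simp add: MC_def nth_list_update)
    next
      assume i: "i = 2"
      show ?thesis using True a i lin_real_scale(2)[OF lin_th_snd, of "\<xi> (fst (xs ! 0)) * \<xi> (fst (xs ! 1))"]
        by (simp add: MC_def nth_list_update)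
    qed
  qed
qed

definition Nx where "Nx = (SOME K. \<forall>x. norm (\<xi> x) \<le> norm x * K \<and> 0 \<le> K)"
definition Nt where "Nt = (SOME K. \<forall>x. norm (\<theta> x) \<le> norm x * K \<and> 0 \<le> K)"

lemma Nx: "norm (\<xi> x) \<le> norm x * Nx" "0 \<le> Nx"
proof -
  have "\<exists>K. \<forall>x. norm (\<xi> x) \<le> norm x * K \<and> 0 \<le> K"
    using bounded_linear.nonneg_bounded[of \<xi>] lxi linear_conv_bounded_linear by metis
  from someI_ex[OF this] show "norm (\<xi> x) \<le> norm x * Nx" "0 \<le> Nx" unfolding Nx_def by auto
qed
lemma Nt: "norm (\<theta> x) \<le> norm x * Nt" "0 \<le> Nt"
proof -
  have "\<exists>K. \<forall>x. norm (\<theta> x) \<le> norm x * K \<and> 0 \<le> K"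
    using bounded_linear.nonneg_bounded[of \<theta>] lth linear_conv_bounded_linear by metis
  from someI_ex[OF this] show "norm (\<theta> x) \<le> norm x * Nt" "0 \<le> Nt" unfolding Nt_def by auto
qed

lemma mbound_MC: "mbound MC (6 * Nx * Nx * Nt * norm a) 1"
  unfolding mbound_def
proof (intro allI impI)
  fix n and xs :: "('a \<times> 'a) list" assume l: "length xs = n"
  have p0: "0 \<le> prod_list (map norm xs)" by (rule prod_list_nonneg) auto
  show "norm (MC n xs) \<le> 6 * Nx * Nx * Nt * norm a * 1 ^ n / fact n * prod_list (map norm xs)"
  proof (cases "n = 3")
    case False then show ?thesis using p0 Nx Nt by (simp add: MC_def)
  next
    case True
    then obtain x0 x1 x2 where xs: "xs = [x0, x1, x2]" using l
      by (metis (no_types) length_0_conv length_Suc_conv numeral_3_eq_3)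
    have f: "fact 3 = (6::real)" by (simp add: numeral_3_eq_3)
    have b0: "\<bar>\<xi> (fst x0)\<bar> \<le> norm x0 * Nx" using Nx(1)[of "fst x0"] norm_fst_le[of "fst x0" "snd x0", unfolded prod.collapse] Nx(2)
      by (simp) (meson mult_right_mono order_trans)
    have b1: "\<bar>\<xi> (fst x1)\<bar> \<le> norm x1 * Nx" using Nx(1)[of "fst x1"] norm_fst_le[of "fst x1" "snd x1", unfolded prod.collapse] Nx(2)
      by (simp) (meson mult_right_mono order_trans)
    have b2: "\<bar>\<theta> (snd x2)\<bar> \<le> norm x2 * Nt" using Nt(1)[of "snd x2"] norm_snd_le[of "snd x2" "fst x2", unfolded prod.collapse] Nt(2)
      by (simp) (meson mult_right_mono order_trans)
    have "norm (MC n xs) = \<bar>\<xi> (fst x0)\<bar> * \<bar>\<xi> (fst x1)\<bar> * \<bar>\<theta> (snd x2)\<bar> * norm a"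
      using True by (simp add: MC_def xs abs_mult)
    also have "\<dots> \<le> (norm x0 * Nx) * (norm x1 * Nx) * (norm x2 * Nt) * norm a"
      using Nx(2) Nt(2) by (intro mult_mono b0 b1 b2 mult_nonneg_nonneg) auto
    also have "\<dots> = 6 * Nx * Nx * Nt * norm a * 1 ^ n / fact n * prod_list (map norm xs)"
      using True by (simp add: xs f)
    finally show ?thesis .
  qed
qed

lemma good_MC: "goodM MC"
  unfolding goodM_def using slotlin_MC mbound_MC Nx Nt
  by (intro conjI exI[of _ "6 * Nx * Nx * Nt * norm a"] exI[of _ 1]) auto

lemma smooth_rk: "smooth_map (\<lambda>(x, y). rk x y)"
proof -
  have "(\<lambda>(x, y). rk x y) = (\<lambda>z. Ssum ME z + Ssum MC z)"
    by (rule ext) (auto simp: rk_def Ssum_ME Ssum_MC)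
  then show ?thesis using smooth_add[OF smooth_Ssum[OF good_ME] smooth_Ssum[OF good_MC]] by simp
qed

end

context RK begin

lemma Tn_ME_0:
  "Tn ME (0, v) (u, 0) n = (if n = 2 then br u v else 0)"
proof -
  consider "n = 0" | "n = 1" | "n = 2" | k where "n = Suc (Suc (Suc k))"
    by (metis One_nat_def Suc_1 not0_implies_Suc)
  then show ?thesis
  proof cases
    case 1 then show ?thesis by (simp add: Tn_def)
  next
    case 2 then show ?thesis by (simp add: Tn_def ME_def)
  next
    case 3 then show ?thesis by (simp add: Tn_def ME_def numeral_2_eq_2 lessThan_Suc)
  next
    case 4
    have "ME n ((replicate n (0, v))[i := (u, 0)]) = 0" if i: "i < n" for i
    proof -
      define L where "L = (replicate n (0::'a, v))[i := (u, 0)]"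
      define m where "m = Suc (Suc k)"
      have n: "n = Suc m" by (simp add: 4 m_def)
      define p where "p = (if i = 0 then 1 else (0::nat))"
      have pm: "p < m" by (simp add: p_def m_def)
      have pi: "p \<noteq> i" by (simp add: p_def)
      have "L ! p = (0, v)" using pm n pi by (simp add: L_def del: replicate_Suc)
      have lL: "length L = n" by (simp add: L_def)
      then have "map fst (take m L) ! p = 0"
        using pm n \<open>L ! p = (0, v)\<close> by simp
      then have "foldr br (map fst (take m L)) (snd (L ! m)) = 0"
        by (rule comp_zero[rotated]) (use pm n lL in simp)
      then have "ME (Suc m) L = 0" by (simp add: ME_Suc)
      then show ?thesis by (simp only: n L_def)
    qed
    then show ?thesis unfolding Tn_def using 4 by simp
  qed
qed

lemma bracket_E: "((\<lambda>t. E (t *\<^sub>R u) v) has_vector_derivative br u v) (at 0)"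
proof -
  define L where "L h = (\<Sum>n. Tn ME (0, v) h n)" for h
  have dL: "(Ssum ME has_derivative L) (at ((\<lambda>t. (t *\<^sub>R u, v)) 0))"
    using Ssum_deriv[OF good_ME, of "(0, v)"] by (simp add: L_def[abs_def])
  have dg: "((\<lambda>t. (t *\<^sub>R u, v)) has_derivative (\<lambda>t. (t *\<^sub>R u, 0))) (at 0)"
    by (auto intro!: derivative_eq_intros)
  have lin: "linear L" using has_derivative_linear[OF dL] .
  have Lu: "L (u, 0) = br u v"
  proof -
    have "(\<lambda>n. Tn ME (0, v) (u, 0) n) = (\<lambda>n. if n = 2 then br u v else 0)"
      by (rule ext) (simp add: Tn_ME_0)
    then show ?thesis unfolding L_def using sums_single[of 2 "\<lambda>_. br u v"] sums_unique by metis
  qed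
  have "(L \<circ> (\<lambda>t. (t *\<^sub>R u, 0))) = (\<lambda>t. t *\<^sub>R br u v)"
  proof (rule ext)
    fix t :: real
    have "(t *\<^sub>R u, 0::'a) = t *\<^sub>R (u, 0)" by simp
    then show "(L \<circ> (\<lambda>t. (t *\<^sub>R u, 0))) t = t *\<^sub>R br u v"
      using linear_scale[OF lin, of t "(u, 0)"] Lu by simp
  qed
  then have "((Ssum ME \<circ> (\<lambda>t. (t *\<^sub>R u, v))) has_derivative (\<lambda>t. t *\<^sub>R br u v)) (at 0)"
    using diff_chain_at[OF dg dL] by simp
  moreover have "Ssum ME \<circ> (\<lambda>t. (t *\<^sub>R u, v)) = (\<lambda>t. E (t *\<^sub>R u) v)"
    by (rule ext) (simp add: Ssum_ME)
  ultimately show ?thesis by (simp add: has_vector_derivative_def)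
qed

lemma bracket_C: "((\<lambda>t. (\<xi> (t *\<^sub>R u) * \<xi> (t *\<^sub>R u) * \<theta> v) *\<^sub>R a) has_vector_derivative 0) (at 0)"
proof -
  define c where "c = \<xi> u * \<xi> u * \<theta> v"
  have "(\<lambda>t. (\<xi> (t *\<^sub>R u) * \<xi> (t *\<^sub>R u) * \<theta> v) *\<^sub>R a) = (\<lambda>t. (t * t * c) *\<^sub>R a)"
    by (rule ext) (simp add: linear_scale[OF lxi] c_def)
  moreover have "((\<lambda>t. (t * t * c) *\<^sub>R a) has_vector_derivative 0) (at 0)"
    by (auto intro!: derivative_eq_intros)
  ultimately show ?thesis by simp
qed

lemma bracket_rk: "rack_bracket_is rk br"
  unfolding rack_bracket_is_def rk_def
proof (intro allI)
  fix u v
  show "((\<lambda>t. E (t *\<^sub>R u) v + (\<xi> (t *\<^sub>R u) * \<xi> (t *\<^sub>R u) * \<theta> v) *\<^sub>R a) has_vector_derivative br u v) (at 0)"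
    using has_vector_derivative_add[OF bracket_E bracket_C] by simp
qed

lemma lin_rk: "linear (rk x)"
  unfolding rk_def[abs_def]
  by (rule linearI) (simp_all add: E_add E_scale linear_add[OF lth] linear_scale[OF lth] algebra_simps scaleR_add_left)

lemma rk_inj: "inj (rk x)"
proof -
  have "y = 0" if "rk x y = 0" for y
  proof -
    define c where "c = \<xi> x * \<xi> x"
    have c0: "0 \<le> c" by (simp add: c_def)
    have "E x y + (c * \<theta> y) *\<^sub>R a = 0" using that by (simp add: rk_def c_def)
    then have "\<theta> (E x y + (c * \<theta> y) *\<^sub>R a) = 0" by (simp add: linear_0[OF lth])
    then have "\<theta> y * (1 + c * \<theta> a) = 0"
      by (simp add: linear_add[OF lth] linear_scale[OF lth] E_functional[OF lth th_br] algebra_simps)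
    moreover have "1 + c * \<theta> a > 0" using c0 th_a by (simp add: add_pos_nonneg)
    ultimately have "\<theta> y = 0" by simp
    then have "E x y = 0" using \<open>E x y + (c * \<theta> y) *\<^sub>R a = 0\<close> by simp
    then have "E (- x) (E x y) = E (- x) 0" by simp
    then show "y = 0" by (simp add: E_inv linear_0[OF linear_E])
  qed
  then show ?thesis by (simp add: linear_injective_0[OF lin_rk[of x]])
qed

lemma rk_bij: "bij (rk x)"
  unfolding bij_def using rk_inj linear_inj_imp_surj[OF lin_rk rk_inj] by simp

lemma rk_0: "rk 0 = id"
  by (rule ext) (simp add: rk_def linear_0[OF lxi])

lemma rk_x0: "rk x 0 = 0"
  using linear_0[OF lin_rk] .

lemma rk_rack: "rk x (rk y z) = rk (rk x y) (rk x z)"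
proof -
  let ?p = "\<lambda>w. \<xi> w * \<xi> w"
  have Ea: "E w a = a" for w using E_central a_c(2) by blast
  have xiE: "\<xi> (E w q) = \<xi> q" for w q using E_functional[OF lxi xi_br] .
  have thE: "\<theta> (E w q) = \<theta> q" for w q using E_functional[OF lth th_br] .
  have Esh: "E (E x y + s *\<^sub>R a) = E (E x y)" for s using E_shift a_c(1) by blast
  have L: "rk x (rk y z) = E x (E y z) + (?p y * \<theta> z) *\<^sub>R a + (?p x * (\<theta> z + ?p y * \<theta> z * \<theta> a)) *\<^sub>R a"
    by (simp add: rk_def E_add E_scale Ea linear_add[OF lth] linear_scale[OF lth] thE)
  have xi_rk: "\<xi> (rk x y) = \<xi> y"
    by (simp add: rk_def linear_add[OF lxi] linear_scale[OF lxi] xiE xi_a)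
  have R: "rk (rk x y) (rk x z) = E x (E y z) + (?p x * \<theta> z) *\<^sub>R a + (?p y * (\<theta> z + ?p x * \<theta> z * \<theta> a)) *\<^sub>R a"
  proof -
    have e1: "E (rk x y) = E (E x y)" unfolding rk_def by (rule Esh)
    have e2: "E (E x y) (rk x z) = E x (E y z) + (?p x * \<theta> z) *\<^sub>R a"
      unfolding rk_def[of x z] E_add E_scale Ea E_conj ..
    have e3: "\<theta> (rk x z) = \<theta> z + ?p x * \<theta> z * \<theta> a"
      unfolding rk_def[of x z] linear_add[OF lth] linear_scale[OF lth] thE by simp
    have "rk (rk x y) (rk x z) = E (rk x y) (rk x z) + (\<xi> (rk x y) * \<xi> (rk x y) * \<theta> (rk x z)) *\<^sub>R a"
      by (rule rk_def)
    also have "\<dots> = E x (E y z) + (?p x * \<theta> z) *\<^sub>R a + (?p y * (\<theta> z + ?p x * \<theta> z * \<theta> a)) *\<^sub>R a"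
      unfolding xi_rk e1 e2 e3 by (rule refl)
    finally show ?thesis .
  qed
  show ?thesis unfolding L R by (simp add: algebra_simps)
qed

lemma lie_rack_rk: "linear_lie_rack rk"
  unfolding linear_lie_rack_def
  using smooth_rk lin_rk rk_bij rk_rack rk_x0 rk_0 by blast

end

context RK begin

definition Asym :: "nat \<Rightarrow> 'a list \<Rightarrow> 'a \<Rightarrow> 'a" where
  "Asym n xs y = (1 / (fact n * fact n)) *\<^sub>R (\<Sum>\<sigma>\<in>{\<sigma>. \<sigma> permutes {..<n}}. foldr br (map (\<lambda>i. xs ! \<sigma> i) [0..<n]) y)"

definition AA :: "nat \<Rightarrow> 'a list \<Rightarrow> 'a \<Rightarrow> 'a" where
  "AA n xs y = Asym n xs y + (if n = 2 then (prod_list (map \<xi> xs) * \<theta> y) *\<^sub>R a else 0)"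

lemma lin_AA: "linear (AA n xs)"
proof -
  have l1: "linear (Asym n xs)"
    unfolding Asym_def[abs_def]
    by (rule linear_compose_scale_right, rule lin_sum) (rule comp_lin_y)
  have l2: "linear (\<lambda>y. (if n = 2 then (prod_list (map \<xi> xs) * \<theta> y) *\<^sub>R a else 0))"
    by (cases "n = 2") (auto intro: lin_real_scale(2)[OF lth] simp: linear_zero)
  show ?thesis unfolding AA_def[abs_def] using linear_compose_add[OF l1 l2] by simp
qed

lemma perm_map_update:
  assumes s: "\<sigma> permutes {..<n}" and l: "length xs = n" and i: "i < n"
  shows "map (\<lambda>k. (xs[i := v]) ! \<sigma> k) [0..<n] = (map (\<lambda>k. xs ! \<sigma> k) [0..<n])[inv \<sigma> i := v]"
proof (rule nth_equalityI)
  show "length (map (\<lambda>k. (xs[i := v]) ! \<sigma> k) [0..<n]) = length ((map (\<lambda>k. xs ! \<sigma> k) [0..<n])[inv \<sigma> i := v])"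
    by simp
  fix k assume "k < length (map (\<lambda>k. (xs[i := v]) ! \<sigma> k) [0..<n])"
  then have k: "k < n" by simp
  have sk: "\<sigma> k < n" using permutes_in_image[OF s] k by auto
  have eq: "(\<sigma> k = i) = (k = inv \<sigma> i)" using permutes_inv_eq[OF s, of i k] by auto
  show "map (\<lambda>k. (xs[i := v]) ! \<sigma> k) [0..<n] ! k = (map (\<lambda>k. xs ! \<sigma> k) [0..<n])[inv \<sigma> i := v] ! k"
    using k sk l eq by (auto simp: nth_list_update)
qed

lemma multilinear_AA: "multilinear n (\<lambda>xs. AA n xs y)"
  unfolding multilinear_def
proof (intro allI impI)
  fix xs :: "'a list" and i assume a: "length xs = n \<and> i < n"
  have l1: "linear (\<lambda>v. Asym n (xs[i := v]) y)"
    unfolding Asym_def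
  proof (rule linear_compose_scale_right, rule lin_sum)
    fix \<sigma> assume "\<sigma> \<in> {\<sigma>. \<sigma> permutes {..<n}}"
    then have s: "\<sigma> permutes {..<n}" by simp
    have ii: "inv \<sigma> i < n" using permutes_in_image[OF permutes_inv[OF s]] a by auto
    show "linear (\<lambda>v. foldr br (map (\<lambda>k. (xs[i := v]) ! \<sigma> k) [0..<n]) y)"
      unfolding perm_map_update[OF s conjunct1[OF a] conjunct2[OF a]]
      by (rule comp_slot) (use ii in simp)
  qed
  have l2: "linear (\<lambda>v. (if n = 2 then (prod_list (map \<xi> (xs[i := v])) * \<theta> y) *\<^sub>R a else 0))"
  proof (cases "n = 2")
    case False then show ?thesis by (simp add: linear_zero)
  next
    case True
    have "(\<lambda>v. (if n = 2 then (prod_list (map \<xi> (xs[i := v])) * \<theta> y) *\<^sub>R a else 0))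
        = (\<lambda>v. (prod_list (map \<xi> (take i xs)) * \<xi> v * (prod_list (map \<xi> (drop (Suc i) xs)) * \<theta> y)) *\<^sub>R a)"
      using True a by (simp add: upd_conv_take_nth_drop mult.assoc)
    then show ?thesis using lin_real_scale(3)[OF lxi] by simp
  qed
  show "linear (\<lambda>v. AA n (xs[i := v]) y)"
    unfolding AA_def using linear_compose_add[OF l1 l2] by simp
qed

lemma symmetric_AA: "symmetric_args n (\<lambda>xs. AA n xs y)"
  unfolding symmetric_args_def
proof (intro allI impI)
  fix xs ys :: "'a list" assume a: "length xs = n \<and> mset xs = mset ys"
  then have l: "length xs = n" and m: "mset xs = mset ys" by auto
  have ly: "length ys = n" using mset_eq_length[OF m] l by simp
  obtain p where p: "p permutes {..<length ys}" "permute_list p ys = xs"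
    using mset_eq_permutation[OF m] by blast
  have pn: "p permutes {..<n}" using p(1) ly by simp
  have xsp: "xs ! k = ys ! p k" if "k < n" for k
    using permute_list_nth[OF p(1)] that ly p(2) by auto
  have S: "(\<Sum>\<sigma>\<in>{\<sigma>. \<sigma> permutes {..<n}}. foldr br (map (\<lambda>i. xs ! \<sigma> i) [0..<n]) y)
         = (\<Sum>\<tau>\<in>{\<sigma>. \<sigma> permutes {..<n}}. foldr br (map (\<lambda>i. ys ! \<tau> i) [0..<n]) y)"
  proof (rule sum.reindex_bij_witness[where j = "\<lambda>\<sigma>. p \<circ> \<sigma>" and i = "\<lambda>\<tau>. inv p \<circ> \<tau>"])
    fix \<sigma> assume "\<sigma> \<in> {\<sigma>. \<sigma> permutes {..<n}}"
    then have s: "\<sigma> permutes {..<n}" by simp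
    show "inv p \<circ> (p \<circ> \<sigma>) = \<sigma>" by (simp add: o_assoc permutes_inv_o(2)[OF pn])
    show "p \<circ> \<sigma> \<in> {\<sigma>. \<sigma> permutes {..<n}}" using permutes_compose[OF s pn] by simp
    have "map (\<lambda>i. ys ! (p \<circ> \<sigma>) i) [0..<n] = map (\<lambda>i. xs ! \<sigma> i) [0..<n]"
    proof (rule map_cong[OF refl])
      fix i assume "i \<in> set [0..<n]"
      then have "\<sigma> i < n" using permutes_in_image[OF s] by auto
      then show "ys ! (p \<circ> \<sigma>) i = xs ! \<sigma> i" using xsp by simp
    qed
    then show "foldr br (map (\<lambda>i. ys ! (p \<circ> \<sigma>) i) [0..<n]) y = foldr br (map (\<lambda>i. xs ! \<sigma> i) [0..<n]) y"
      by (rule arg_cong[where f="\<lambda>L. foldr br L y"])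
  next
    fix \<tau> assume "\<tau> \<in> {\<sigma>. \<sigma> permutes {..<n}}"
    then have t: "\<tau> permutes {..<n}" by simp
    show "p \<circ> (inv p \<circ> \<tau>) = \<tau>" by (simp add: o_assoc permutes_inv_o(1)[OF pn])
    show "inv p \<circ> \<tau> \<in> {\<sigma>. \<sigma> permutes {..<n}}" using permutes_compose[OF t permutes_inv[OF pn]] by simp
  qed
  have P: "prod_list (map \<xi> xs) = prod_list (map \<xi> ys)"
    by (metis m mset_map prod_mset_prod_list)
  show "AA n xs y = AA n ys y" unfolding AA_def Asym_def S P ..
qed

lemma Asym_rep: "Asym n (replicate n x) y = (1 / fact n) *\<^sub>R (br x ^^ n) y"
proof -
  have "(\<Sum>\<sigma>\<in>{\<sigma>. \<sigma> permutes {..<n}}. foldr br (map (\<lambda>i. replicate n x ! \<sigma> i) [0..<n]) y)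
      = (\<Sum>\<sigma>\<in>{\<sigma>. \<sigma> permutes {..<n}}. (br x ^^ n) y)"
  proof (rule sum.cong[OF refl])
    fix \<sigma> assume "\<sigma> \<in> {\<sigma>. \<sigma> permutes {..<n}}"
    then have s: "\<sigma> permutes {..<n}" by simp
    have "map (\<lambda>i. replicate n x ! \<sigma> i) [0..<n] = map (\<lambda>i. x) [0..<n]"
      by (rule map_cong[OF refl]) (use permutes_in_image[OF s] in auto)
    then show "foldr br (map (\<lambda>i. replicate n x ! \<sigma> i) [0..<n]) y = (br x ^^ n) y"
      by (simp add: map_replicate_const)
  qed
  also have "\<dots> = fact n *\<^sub>R (br x ^^ n) y"
    using card_permutations[of "{..<n}" n] by (simp add: sum_constant_scaleR)
  finally show ?thesis unfolding Asym_def by simp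
qed

lemma analytic_rk: "analytic_rack rk"
  unfolding analytic_rack_def
proof (intro conjI exI[of _ AA] allI impI)
  show "linear_lie_rack rk" by (rule lie_rack_rk)
  fix n xs assume "length (xs :: 'a list) = n" then show "linear (AA n xs)" by (simp add: lin_AA)
next
  fix n y show "multilinear n (\<lambda>xs. AA n xs y)" by (rule multilinear_AA)
next
  fix n y show "symmetric_args n (\<lambda>xs. AA n xs y)" by (rule symmetric_AA)
next
  fix x y
  define f where "f k = (1 / fact k) *\<^sub>R (br x ^^ k) y" for k
  have "f sums (E x y - y + f 0)" using sums_E[of x y] by (simp add: f_def[abs_def])
  then have s1: "(\<lambda>n. f (Suc n)) sums (E x y - y)" using sums_Suc_iff[of f] by blast
  have s2: "(\<lambda>n. if n = 1 then (\<xi> x * \<xi> x * \<theta> y) *\<^sub>R a else 0) sums ((\<xi> x * \<xi> x * \<theta> y) *\<^sub>R a)"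
    using sums_single[of 1 "\<lambda>_. (\<xi> x * \<xi> x * \<theta> y) *\<^sub>R a"] by simp
  have "(\<lambda>n. f (Suc n) + (if n = 1 then (\<xi> x * \<xi> x * \<theta> y) *\<^sub>R a else 0)) sums (E x y - y + (\<xi> x * \<xi> x * \<theta> y) *\<^sub>R a)"
    by (rule sums_add[OF s1 s2])
  moreover have "(\<lambda>n. AA (Suc n) (replicate (Suc n) x) y) = (\<lambda>n. f (Suc n) + (if n = 1 then (\<xi> x * \<xi> x * \<theta> y) *\<^sub>R a else 0))"
  proof (rule ext)
    fix n
    show "AA (Suc n) (replicate (Suc n) x) y = f (Suc n) + (if n = 1 then (\<xi> x * \<xi> x * \<theta> y) *\<^sub>R a else 0)"
      unfolding AA_def Asym_rep f_def by (cases "n = 1") (auto simp: numeral_2_eq_2)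
  qed
  ultimately show "(\<lambda>n. AA (Suc n) (replicate (Suc n) x) y) sums (rk x y - y)"
    by (simp add: rk_def algebra_simps)
qed

lemma exp_ad_kill:
  assumes "br x w = 0"
  shows "exp_ad br c x w = w"
proof -
  have "(br x ^^ Suc k) w = 0" for k
    using assms linear_0[OF lin_pow[where x=x and k=k]] by (simp add: funpow_Suc_right del: funpow.simps)
  then have "(\<lambda>k. ((c ^ k) / fact k) *\<^sub>R ((br x ^^ k) w)) = (\<lambda>k. if k = 0 then w else 0)"
    by (intro ext) (case_tac k, auto simp del: funpow.simps)
  then show ?thesis unfolding exp_ad_def using sums_single[of 0 "\<lambda>_. w"] sums_unique by metis
qed

lemma not_rigid:
  assumes x0: "\<xi> x0 = 1" and w: "br x0 w = 0" "\<theta> w \<noteq> 0" and a0: "a \<noteq> 0"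
  shows "\<not> rigid br"
proof
  assume r: "rigid br"
  have "analytic_rack rk \<and> rack_bracket_is rk br" using analytic_rk bracket_rk by simp
  then have "\<exists>F p P. real_analytic_fun F \<and> F 0 = 1 \<and> invariant_form br p P \<and>
        (\<forall>x y. rk x y = exp_ad br (F (P (replicate p x))) x y)"
    using spec[OF r[unfolded rigid_def], of rk] by (rule mp[rotated])
  then obtain F p P where FP0: "real_analytic_fun F \<and> F 0 = 1 \<and> invariant_form br p P \<and>
        (\<forall>x y. rk x y = exp_ad br (F (P (replicate p x))) x y)"
    by (elim exE) (rule that, assumption)
  then have FP: "\<forall>x y. rk x y = exp_ad br (F (P (replicate p x))) x y" by (elim conjE)
  have "rk x0 w = w + (\<theta> w) *\<^sub>R a"
    using exp_ad_kill[OF w(1), of 1] by (simp add: rk_def x0 E_exp_ad[symmetric])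
  moreover have "rk x0 w = w" using FP exp_ad_kill[OF w(1)] by simp
  ultimately have "(\<theta> w) *\<^sub>R a = 0" by simp
  then show False using w(2) a0 by simp
qed

end


lemma func_exists:
  fixes T :: "'a::euclidean_space set"
  assumes "x1 \<notin> span T"
  shows "\<exists>f. linear f \<and> (\<forall>t\<in>span T. f t = (0::real)) \<and> f x1 = 1"
proof -
  obtain y z where yz: "y \<in> span T" "\<And>w. w \<in> span T \<Longrightarrow> orthogonal z w" "x1 = y + z"
    using orthogonal_subspace_decomp_exists[of T x1] by blast
  have z0: "z \<noteq> 0" using assms yz by auto
  define f where "f v = (z \<bullet> v) / (z \<bullet> z)" for v
  have "linear f" unfolding f_def[abs_def]
    by (rule linearI) (simp_all add: inner_add_right add_divide_distrib)
  moreover have "\<forall>t\<in>span T. f t = 0" using yz(2) by (simp add: f_def orthogonal_def)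
  moreover have "f x1 = 1"
  proof -
    have "z \<bullet> y = 0" using yz(2)[OF yz(1)] by (simp add: orthogonal_def)
    then show ?thesis using z0 by (simp add: f_def yz(3) inner_add_right)
  qed
  ultimately show ?thesis by blast
qed

lemma get_xi:
  fixes br :: "'a::euclidean_space \<Rightarrow> 'a \<Rightarrow> 'a"
  assumes lla: "left_leibniz_algebra br" and a: "a \<in> lcenter br"
    and H: "{u + v | u v. u \<in> derived br \<and> v \<in> lcenter br} \<noteq> UNIV"
  shows "\<exists>(\<xi>::'a \<Rightarrow> real) x0. linear \<xi> \<and> (\<forall>u v. \<xi> (br u v) = 0) \<and> \<xi> a = 0 \<and> \<xi> x0 = 1"
proof -
  interpret LLA br by (rule LLA.intro[OF lla])
  define S where "S = {br x y | x y. True}"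
  have sub: "span (insert a S) \<subseteq> {u + v | u v. u \<in> derived br \<and> v \<in> lcenter br}"
  proof
    fix x assume "x \<in> span (insert a S)"
    then obtain k where k: "x - k *\<^sub>R a \<in> span S" by (auto simp: span_insert)
    have "k *\<^sub>R a \<in> lcenter br" using a by (simp add: lcenter_def br_scale_l br_scale_r)
    moreover have "x - k *\<^sub>R a \<in> derived br" using k by (simp add: derived_def S_def)
    ultimately show "x \<in> {u + v | u v. u \<in> derived br \<and> v \<in> lcenter br}"
      by (intro CollectI exI[of _ "x - k *\<^sub>R a"] exI[of _ "k *\<^sub>R a"]) simp
  qed
  obtain x1 where x1: "x1 \<notin> span (insert a S)" using H sub by blast
  obtain f :: "'a \<Rightarrow> real" where f: "linear f" "\<forall>t\<in>span (insert a S). f t = 0" "f x1 = 1"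
    using func_exists[OF x1] by blast
  have "\<forall>u v. f (br u v) = 0" using f(2) by (auto simp: S_def intro: span_base)
  moreover have "f a = 0" using f(2) by (auto intro: span_base)
  ultimately show ?thesis using f by blast
qed

theorem corollary1:
  fixes br :: "'a::euclidean_space \<Rightarrow> 'a \<Rightarrow> 'a"
  assumes "left_leibniz_algebra br"
  shows "(is_lie_bracket br \<and> {u + v | u v. u \<in> derived br \<and> v \<in> lcenter br} \<noteq> UNIV
            \<and> lcenter br \<noteq> {0} \<longrightarrow> \<not> rigid br)
       \<and> ({u + v | u v. u \<in> derived br \<and> v \<in> lcenter br} \<noteq> UNIV
            \<and> \<not> lcenter br \<subseteq> derived br \<longrightarrow> \<not> rigid br)"
proof (intro conjI impI)
  assume h: "is_lie_bracket br \<and> {u + v | u v. u \<in> derived br \<and> v \<in> lcenter br} \<noteq> UNIV \<and> lcenter br \<noteq> {0}"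
  have "0 \<in> lcenter br"
  proof -
    interpret LLA br by (rule LLA.intro[OF assms])
    show ?thesis by (simp add: lcenter_def)
  qed
  then obtain a where a: "a \<in> lcenter br" "a \<noteq> 0" using h by blast
  obtain \<xi> :: "'a \<Rightarrow> real" and x0 where xi: "linear \<xi>" "\<forall>u v. \<xi> (br u v) = 0" "\<xi> a = 0" "\<xi> x0 = 1"
    using get_xi[OF assms a(1)] h by blast
  interpret RK br a \<xi> \<xi>
    by (rule RK.intro[OF LLA.intro[OF assms]], rule RK_axioms.intro)
       (use a xi in \<open>auto simp: lcenter_def\<close>)
  have "br x0 x0 = - br x0 x0" using h unfolding is_lie_bracket_def by blast
  then have "br x0 x0 + br x0 x0 = 0" by (simp add: eq_neg_iff_add_eq_0)
  then have "(2::real) *\<^sub>R br x0 x0 = 0" by (simp add: scaleR_2)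
  then have "br x0 x0 = 0" by simp
  then show "\<not> rigid br" using not_rigid[OF xi(4) _ _ a(2)] xi(4) by simp
next
  assume h: "{u + v | u v. u \<in> derived br \<and> v \<in> lcenter br} \<noteq> UNIV \<and> \<not> lcenter br \<subseteq> derived br"
  then obtain a where a: "a \<in> lcenter br" "a \<notin> derived br" by blast
  have a0: "a \<noteq> 0" using a(2) by (auto simp: derived_def span_zero)
  obtain \<xi> :: "'a \<Rightarrow> real" and x0 where xi: "linear \<xi>" "\<forall>u v. \<xi> (br u v) = 0" "\<xi> a = 0" "\<xi> x0 = 1"
    using get_xi[OF assms a(1)] h by blast
  obtain \<theta> :: "'a \<Rightarrow> real" where th: "linear \<theta>" "\<forall>t\<in>span {br x y | x y. True}. \<theta> t = 0" "\<theta> a = 1"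
    using func_exists[of a "{br x y | x y. True}"] a(2) by (auto simp: derived_def)
  have thbr: "\<forall>u v. \<theta> (br u v) = 0" using th(2) by (auto intro: span_base)
  interpret RK br a \<xi> \<theta>
    by (rule RK.intro[OF LLA.intro[OF assms]], rule RK_axioms.intro)
       (use a xi th thbr in \<open>auto simp: lcenter_def\<close>)
  have "br x0 a = 0" using a(1) by (simp add: lcenter_def)
  then show "\<not> rigid br" using not_rigid[OF xi(4) _ _ a0] th(3) by simp
qed


end
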